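(* Let $K$ be a field, $S=K[x_1,\ldots,x_n]$, and let $I\subset S$ be any monomial ideal minimally generated by $q$ monomials. Then $\operatorname{pd}_S(I^2)\le\dim(\mathbb{M}_q^2)=\binom{q}{2}$.
   Context: $\operatorname{pd}_S$ denotes projective dimension over $S$ (length of the minimal free resolution). $\mathbb{M}_q^2$ is the simplicial complex on vertex set $\{\ell_{i,j}:1\le i\le j\le q\}$ with facets $\mathcal{M}_i=\{\ell_{a,b}:1\le a<b\le q\}\cup\{\ell_{i,i}\}$ for $i\in[q]$; its dimension is the maximal size of a face minus one. *)

theory Defs
  imports Main "HOL-Library.Poly_Mapping"
begin

text \<open>Polynomials over a field K in variables x_0, x_1, ...: finitely supported maps from
  exponent vectors (monomials) to coefficients; multiplication is the library convolution.\<close>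
type_synonym 'a mpoly = "(nat \<Rightarrow>\<^sub>0 nat) \<Rightarrow>\<^sub>0 'a"

definition polyring :: "nat \<Rightarrow> 'a::comm_ring_1 mpoly set" where
  "polyring n = {p. \<forall>m \<in> Poly_Mapping.keys p. Poly_Mapping.keys m \<subseteq> {..<n}}"

definition monomials :: "nat \<Rightarrow> 'a::comm_ring_1 mpoly set" where
  "monomials n = {Poly_Mapping.single m 1 | m. Poly_Mapping.keys m \<subseteq> {..<n}}"

definition ideal_gen :: "nat \<Rightarrow> 'a::comm_ring_1 mpoly set \<Rightarrow> 'a mpoly set" where
  "ideal_gen n G = {(\<Sum>g\<in>H. c g * g) | H c. finite H \<and> H \<subseteq> G \<and> (\<forall>g\<in>H. c g \<in> polyring n)}"

definition ideal_sq :: "nat \<Rightarrow> 'a::comm_ring_1 mpoly set \<Rightarrow> 'a mpoly set" where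
  "ideal_sq n I = ideal_gen n {a * b | a b. a \<in> I \<and> b \<in> I}"

text \<open>The free module S^r, as functions nat => S vanishing from index r on.\<close>
definition vecs :: "nat \<Rightarrow> nat \<Rightarrow> (nat \<Rightarrow> 'a::comm_ring_1 mpoly) set" where
  "vecs n r = {v. (\<forall>j<r. v j \<in> polyring n) \<and> (\<forall>j\<ge>r. v j = 0)}"

definition mapply :: "(nat \<Rightarrow> nat \<Rightarrow> 'a::comm_ring_1) \<Rightarrow> nat \<Rightarrow> nat \<Rightarrow> (nat \<Rightarrow> 'a) \<Rightarrow> (nat \<Rightarrow> 'a)" where
  "mapply A m r v = (\<lambda>j. if j < m then (\<Sum>k<r. A j k * v k) else 0)"

text \<open>A finite free resolution of length len of an ideal J of S:
  0 -> S^(r len) -A len-> ... -A 1-> S^(r 0) -eps-> J -> 0 exact.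
  Matrix A i has r (i-1) rows and r i columns; eps is the augmentation row.\<close>
definition free_resolution ::
  "nat \<Rightarrow> 'a::comm_ring_1 mpoly set \<Rightarrow> nat \<Rightarrow> (nat \<Rightarrow> nat)
    \<Rightarrow> (nat \<Rightarrow> nat \<Rightarrow> nat \<Rightarrow> 'a mpoly) \<Rightarrow> (nat \<Rightarrow> 'a mpoly) \<Rightarrow> bool" where
  "free_resolution n J len r A eps \<longleftrightarrow>
     (\<forall>i\<in>{1..len}. \<forall>j<r (i - 1). \<forall>k<r i. A i j k \<in> polyring n) \<and>
     (\<forall>k<r 0. eps k \<in> polyring n) \<and>
     (\<lambda>v. \<Sum>k<r 0. eps k * v k) ` vecs n (r 0) = J \<and>
     (\<forall>i\<le>len.
        {v \<in> vecs n (r i).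
           (if i = 0 then (\<Sum>k<r 0. eps k * v k) = 0
            else mapply (A i) (r (i - 1)) (r i) v = (\<lambda>_. 0))}
        = (if i < len then mapply (A (Suc i)) (r i) (r (Suc i)) ` vecs n (r (Suc i))
           else {\<lambda>_. 0}))"

definition pd :: "nat \<Rightarrow> 'a::comm_ring_1 mpoly set \<Rightarrow> nat" where
  "pd n J = (LEAST len. \<exists>r A eps. free_resolution n J len r A eps)"

text \<open>The simplicial complex M_q^2 on vertices l_{i,j} = (i,j), 1 <= i <= j <= q.\<close>
definition Mq2_facet :: "nat \<Rightarrow> nat \<Rightarrow> (nat \<times> nat) set" where
  "Mq2_facet q i = {(a, b). 1 \<le> a \<and> a < b \<and> b \<le> q} \<union> {(i, i)}"

definition Mq2 :: "nat \<Rightarrow> (nat \<times> nat) set set" where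
  "Mq2 q = {F. \<exists>i\<in>{1..q}. F \<subseteq> Mq2_facet q i}"

definition sc_dim :: "'v set set \<Rightarrow> int" where
  "sc_dim D = int (Max (card ` D)) - 1"

end

theory Submission
  imports Defs
begin

definition ple :: "(nat \<Rightarrow>\<^sub>0 nat) \<Rightarrow> (nat \<Rightarrow>\<^sub>0 nat) \<Rightarrow> bool" where
  "ple a b \<longleftrightarrow> (\<forall>k. Poly_Mapping.lookup a k \<le> Poly_Mapping.lookup b k)"

lemma lookup_single_mult:
  fixes p :: "'a::comm_ring_1 mpoly"
  shows "Poly_Mapping.lookup (Poly_Mapping.single d c * p) k = (if ple d k then c * Poly_Mapping.lookup p (k - d) else 0)"
proof -
  have "Poly_Mapping.lookup (Poly_Mapping.single d c * p) k = (\<Sum>l. (c when d = l) * (\<Sum>q. Poly_Mapping.lookup p q when k = l + q))"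
    by (simp add: lookup_mult lookup_single)
  also have "\<dots> = c * (\<Sum>q. Poly_Mapping.lookup p q when k = d + q)"
    by (simp add: when_mult)
  also have "(\<Sum>q. Poly_Mapping.lookup p q when k = d + q) = (if ple d k then Poly_Mapping.lookup p (k - d) else 0)"
  proof (cases "ple d k")
    case True
    have "\<And>q. (k = d + q) \<longleftrightarrow> (q = k - d)"
    proof -
      fix q
      show "(k = d + q) \<longleftrightarrow> (q = k - d)"
        using True unfolding ple_def poly_mapping_eq_iff
        by (auto simp: fun_eq_iff lookup_add lookup_minus)
    qed
    then show ?thesis using True by simp
  next
    case False
    have "\<And>q. k \<noteq> d + q"
    proof
      fix q assume "k = d + q"
      then have "\<And>j. Poly_Mapping.lookup k j = Poly_Mapping.lookup d j + Poly_Mapping.lookup q j"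
        by (simp add: lookup_add)
      then show False using False unfolding ple_def by (metis le_add1)
    qed
    then show ?thesis using False by simp
  qed
  finally show ?thesis by simp
qed


lemma ple_refl[simp]: "ple a a" by (simp add: ple_def)
lemma ple_trans: "ple a b \<Longrightarrow> ple b c \<Longrightarrow> ple a c" unfolding ple_def using le_trans by blast
lemma ple_add_left[simp]: "ple a (b + a)" by (simp add: ple_def lookup_add)
lemma ple_add_right[simp]: "ple a (a + b)" by (simp add: ple_def lookup_add)

lemma pm_eqI: "(\<And>k. Poly_Mapping.lookup a k = Poly_Mapping.lookup b k) \<Longrightarrow> a = b"
  by (simp add: poly_mapping_eqI)

lemma ple_minus_iff:
  assumes "ple g f" "ple g b"
  shows "ple (f - g) (b - g) \<longleftrightarrow> ple f b"
  using assms unfolding ple_def by (auto simp: lookup_minus) (metis diff_le_mono le_diff_iff)+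

lemma minus_minus_pm:
  assumes "ple g f" "ple f b"
  shows "(b - g) - (f - g) = (b :: nat \<Rightarrow>\<^sub>0 nat) - f"
proof (intro pm_eqI)
  fix k
  have "Poly_Mapping.lookup g k \<le> Poly_Mapping.lookup f k" "Poly_Mapping.lookup f k \<le> Poly_Mapping.lookup b k"
    using assms unfolding ple_def by auto
  then show "Poly_Mapping.lookup (b - g - (f - g)) k = Poly_Mapping.lookup (b - f) k"
    by (simp add: lookup_minus)
qed

lemma add_minus_pm: "ple g b \<Longrightarrow> (b - g) + g = (b :: nat \<Rightarrow>\<^sub>0 nat)"
  unfolding ple_def by (intro pm_eqI) (simp add: lookup_minus lookup_add)

lemma add_minus_cancel_pm: "(c + g) - g = (c :: nat \<Rightarrow>\<^sub>0 nat)"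
  by (intro pm_eqI) (simp add: lookup_minus lookup_add)

lemma keys_le_add: "Poly_Mapping.keys (c :: nat \<Rightarrow>\<^sub>0 nat) \<subseteq> Poly_Mapping.keys (c + d)"
proof
  fix x assume "x \<in> Poly_Mapping.keys c"
  then have "Poly_Mapping.lookup c x \<noteq> 0" by (simp only: lookup_not_eq_zero_eq_in_keys)
  then have "Poly_Mapping.lookup (c + d) x \<noteq> 0" by (simp add: lookup_add)
  then show "x \<in> Poly_Mapping.keys (c + d)" by (simp only: lookup_not_eq_zero_eq_in_keys)
qed

lemma keys_add_nat: "Poly_Mapping.keys ((c :: nat \<Rightarrow>\<^sub>0 nat) + d) = Poly_Mapping.keys c \<union> Poly_Mapping.keys d"
proof (rule set_eqI)
  fix x
  have "Poly_Mapping.lookup (c + d) x \<noteq> 0 \<longleftrightarrow> Poly_Mapping.lookup c x \<noteq> 0 \<or> Poly_Mapping.lookup d x \<noteq> 0"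
    by (simp add: lookup_add)
  then show "x \<in> Poly_Mapping.keys (c + d) \<longleftrightarrow> x \<in> Poly_Mapping.keys c \<union> Poly_Mapping.keys d"
    by (simp only: lookup_not_eq_zero_eq_in_keys Un_iff)
qed

lemma keys_minus_sub: "Poly_Mapping.keys ((c :: nat \<Rightarrow>\<^sub>0 nat) - d) \<subseteq> Poly_Mapping.keys c"
proof
  fix x assume "x \<in> Poly_Mapping.keys (c - d)"
  then have "Poly_Mapping.lookup (c - d) x \<noteq> 0" by (simp only: lookup_not_eq_zero_eq_in_keys)
  then have "Poly_Mapping.lookup c x \<noteq> 0" by (simp add: lookup_minus)
  then show "x \<in> Poly_Mapping.keys c" by (simp only: lookup_not_eq_zero_eq_in_keys)
qed

definition lab :: "(nat \<Rightarrow> (nat \<Rightarrow>\<^sub>0 nat)) \<Rightarrow> nat set \<Rightarrow> (nat \<Rightarrow>\<^sub>0 nat)" where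
  "lab e F = Abs_poly_mapping (\<lambda>k. Max (insert 0 ((\<lambda>v. Poly_Mapping.lookup (e v) k) ` F)))"

lemma lookup_lab:
  assumes "finite F"
  shows "Poly_Mapping.lookup (lab e F) k = Max (insert 0 ((\<lambda>v. Poly_Mapping.lookup (e v) k) ` F))"
proof -
  have "{k. Max (insert 0 ((\<lambda>v. Poly_Mapping.lookup (e v) k) ` F)) \<noteq> 0} \<subseteq> (\<Union>v\<in>F. Poly_Mapping.keys (e v))"
  proof
    fix k assume "k \<in> {k. Max (insert 0 ((\<lambda>v. Poly_Mapping.lookup (e v) k) ` F)) \<noteq> 0}"
    then have "Max (insert 0 ((\<lambda>v. Poly_Mapping.lookup (e v) k) ` F)) \<noteq> 0" by simp
    moreover have "Max (insert 0 ((\<lambda>v. Poly_Mapping.lookup (e v) k) ` F)) \<in> insert 0 ((\<lambda>v. Poly_Mapping.lookup (e v) k) ` F)"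
      using assms by (intro Max_in) auto
    ultimately show "k \<in> (\<Union>v\<in>F. Poly_Mapping.keys (e v))" by (auto simp: in_keys_iff)
  qed
  moreover have "finite (\<Union>v\<in>F. Poly_Mapping.keys (e v))" using assms by simp
  ultimately have "finite {k. Max (insert 0 ((\<lambda>v. Poly_Mapping.lookup (e v) k) ` F)) \<noteq> 0}"
    using finite_subset by blast
  then show ?thesis unfolding lab_def by simp
qed

lemma ple_lab_iff:
  assumes "finite F"
  shows "ple (lab e F) b \<longleftrightarrow> (\<forall>v\<in>F. ple (e v) b)"
  using assms unfolding ple_def by (auto simp: lookup_lab)

lemma ple_e_lab: "finite F \<Longrightarrow> v \<in> F \<Longrightarrow> ple (e v) (lab e F)"
  unfolding ple_def by (auto simp: lookup_lab)

lemma lab_mono: "finite F \<Longrightarrow> G \<subseteq> F \<Longrightarrow> ple (lab e G) (lab e F)"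
  using ple_lab_iff[of G e "lab e F"] ple_e_lab[of F] finite_subset by blast

lemma lab_empty[simp]: "lab e {} = 0"
  by (intro pm_eqI) (simp add: lookup_lab)

lemma lab_single[simp]: "lab e {v} = e v"
  by (intro pm_eqI) (simp add: lookup_lab)

lemma lab_insert_ple: "finite F \<Longrightarrow> ple (lab e (insert v F)) b \<longleftrightarrow> ple (e v) b \<and> ple (lab e F) b"
  by (simp add: ple_lab_iff)

lemma keys_lab: "finite F \<Longrightarrow> Poly_Mapping.keys (lab e F) \<subseteq> (\<Union>v\<in>F. Poly_Mapping.keys (e v))"
proof
  fix k assume F: "finite F" and k: "k \<in> Poly_Mapping.keys (lab e F)"
  have "Max (insert 0 ((\<lambda>v. Poly_Mapping.lookup (e v) k) ` F)) \<in> insert 0 ((\<lambda>v. Poly_Mapping.lookup (e v) k) ` F)"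
    using F by (intro Max_in) auto
  then show "k \<in> (\<Union>v\<in>F. Poly_Mapping.keys (e v))" using k F by (auto simp: in_keys_iff lookup_lab)
qed

definition sg :: "nat \<Rightarrow> nat set \<Rightarrow> 'a::comm_ring_1" where
  "sg u F = (-1) ^ card {w\<in>F. w < u}"

lemma sg_sq[simp]: "sg u F * sg u F = (1::'a::comm_ring_1)"
  unfolding sg_def by (simp add: power_mult_distrib[symmetric])

lemma card_less_insert:
  assumes "finite F" "a \<notin> F"
  shows "card {w\<in>insert a F. w < u} = card {w\<in>F. w < u} + (if a < u then 1 else 0)"
proof -
  have "{w\<in>insert a F. w < u} = (if a < u then insert a {w\<in>F. w < u} else {w\<in>F. w < u})" by auto
  then show ?thesis using assms by auto
qed


definition hh :: "nat \<Rightarrow> (nat set \<Rightarrow> 'a::comm_ring_1) \<Rightarrow> nat set \<Rightarrow> 'a" where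
  "hh v x G = (if v \<in> G then sg v G * x (G - {v}) else 0)"

locale cx =
  fixes V :: "nat set" and D :: "nat set set" and e :: "nat \<Rightarrow> (nat \<Rightarrow>\<^sub>0 nat)" and n :: nat
  assumes finV: "finite V"
    and D_sub: "F \<in> D \<Longrightarrow> F \<subseteq> V"
    and D_down: "F \<in> D \<Longrightarrow> G \<subseteq> F \<Longrightarrow> G \<in> D"
    and D_empty: "{} \<in> D"
    and e_keys: "v \<in> V \<Longrightarrow> Poly_Mapping.keys (e v) \<subseteq> {..<n}"
    and cone: "\<And>b F0. F0 \<in> D \<Longrightarrow> F0 \<noteq> {} \<Longrightarrow> ple (lab e F0) b \<Longrightarrow>
       \<exists>v\<in>V. \<forall>F\<in>D. ple (lab e F) b \<longrightarrow> insert v F \<in> D \<and> ple (lab e (insert v F)) b"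
begin

lemma D_fin: "F \<in> D \<Longrightarrow> finite F"
  using D_sub finV finite_subset by blast

definition dd :: "(nat set \<Rightarrow> 'a::comm_ring_1 mpoly) \<Rightarrow> nat set \<Rightarrow> 'a mpoly" where
  "dd z G = (\<Sum>u\<in>V-G. if insert u G \<in> D then Poly_Mapping.single (lab e (insert u G) - lab e G) (sg u (insert u G)) * z (insert u G) else 0)"

definition sd :: "(nat set \<Rightarrow> 'a::comm_ring_1) \<Rightarrow> nat set \<Rightarrow> 'a" where
  "sd x G = (\<Sum>u\<in>V-G. if insert u G \<in> D then sg u (insert u G) * x (insert u G) else 0)"

definition coef :: "(nat set \<Rightarrow> 'a::comm_ring_1 mpoly) \<Rightarrow> nat set \<Rightarrow> (nat \<Rightarrow>\<^sub>0 nat) \<Rightarrow> 'a" where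
  "coef z F b = (if ple (lab e F) b then Poly_Mapping.lookup (z F) (b - lab e F) else 0)"

lemma coef_dd: "coef (dd z) G b = sd (\<lambda>F. coef z F b) G"
proof (cases "G \<in> D")
  case False
  then have "\<And>u. insert u G \<notin> D" using D_down by blast
  then show ?thesis by (simp add: coef_def dd_def sd_def)
next
  case GD: True
  then have finG: "finite G" by (rule D_fin)
  show ?thesis
  proof (cases "ple (lab e G) b")
    case True
    have "coef (dd z) G b = (\<Sum>u\<in>V-G. if insert u G \<in> D then
        Poly_Mapping.lookup (Poly_Mapping.single (lab e (insert u G) - lab e G) (sg u (insert u G)) * z (insert u G)) (b - lab e G) else 0)"
      using True by (simp add: coef_def dd_def lookup_sum if_distrib[of "\<lambda>p. Poly_Mapping.lookup p _"] cong: if_cong)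
    also have "\<dots> = sd (\<lambda>F. coef z F b) G"
      unfolding sd_def
    proof (rule sum.cong[OF refl])
      fix u assume u: "u \<in> V - G"
      have m: "ple (lab e G) (lab e (insert u G))" using finG by (intro lab_mono) auto
      show "(if insert u G \<in> D then Poly_Mapping.lookup (Poly_Mapping.single (lab e (insert u G) - lab e G) (sg u (insert u G)) * z (insert u G)) (b - lab e G) else 0)
         = (if insert u G \<in> D then sg u (insert u G) * coef z (insert u G) b else 0)"
        using ple_minus_iff[OF m True] minus_minus_pm[OF m]
        by (simp add: lookup_single_mult coef_def)
    qed
    finally show ?thesis .
  next
    case False
    have "\<And>u. \<not> ple (lab e (insert u G)) b"
      using False finG lab_mono[of "insert _ G" G e] ple_trans by blast
    note nn = this
    have "sd (\<lambda>F. coef z F b) G = 0" unfolding sd_def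
      by (rule sum.neutral) (auto simp: coef_def nn)
    then show ?thesis using False by (simp add: coef_def)
  qed
qed

lemma coef_eqI:
  assumes "\<And>G b. coef z G b = coef w G b"
  shows "z = w"
proof
  fix G
  show "z G = w G"
  proof (rule pm_eqI)
    fix c
    have "coef z G (c + lab e G) = coef w G (c + lab e G)" by (rule assms)
    then show "Poly_Mapping.lookup (z G) c = Poly_Mapping.lookup (w G) c"
      by (simp add: coef_def add_minus_cancel_pm)
  qed
qed


end

lemma sg_swap:
  assumes "finite G" "u \<notin> G" "w \<notin> G" "u \<noteq> w"
  shows "sg w (insert w G) * sg u (insert u (insert w G)) = - (sg u (insert u G) * sg w (insert w (insert u G)) :: 'a::comm_ring_1)"
proof -
  have c1: "card {x\<in>insert w G. x < w} = card {x\<in>G. x < w}" using card_less_insert[OF assms(1,3), of w] by simp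
  have c2: "card {x\<in>insert u G. x < u} = card {x\<in>G. x < u}" using card_less_insert[OF assms(1,2), of u] by simp
  have c3: "card {x\<in>insert u (insert w G). x < u} = card {x\<in>G. x < u} + (if w < u then 1 else 0)"
    using card_less_insert[of "insert w G" u u] card_less_insert[OF assms(1,3), of u] assms by simp
  have c4: "card {x\<in>insert w (insert u G). x < w} = card {x\<in>G. x < w} + (if u < w then 1 else 0)"
    using card_less_insert[of "insert u G" w w] card_less_insert[OF assms(1,2), of w] assms by simp
  show ?thesis unfolding sg_def c1 c2 c3 c4 using assms(4)
    by (cases "u < w") (auto simp: power_add)
qed

lemma sg_homot:
  assumes "finite G" "u \<notin> G" "v \<notin> G" "u \<noteq> v"
  shows "sg u (insert u (insert v G)) * sg v (insert u (insert v G)) + sg v (insert v G) * sg u (insert u G) = (0::'a::comm_ring_1)"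
proof -
  have c1: "card {x\<in>insert v G. x < v} = card {x\<in>G. x < v}" using card_less_insert[OF assms(1,3), of v] by simp
  have c2: "card {x\<in>insert u G. x < u} = card {x\<in>G. x < u}" using card_less_insert[OF assms(1,2), of u] by simp
  have c3: "card {x\<in>insert u (insert v G). x < u} = card {x\<in>G. x < u} + (if v < u then 1 else 0)"
    using card_less_insert[of "insert v G" u u] card_less_insert[OF assms(1,3), of u] assms by simp
  have c4: "card {x\<in>insert u (insert v G). x < v} = card {x\<in>G. x < v} + (if u < v then 1 else 0)"
    using card_less_insert[of "insert v G" u v] card_less_insert[OF assms(1,3), of v] assms by simp
  show ?thesis unfolding sg_def c1 c2 c3 c4 using assms(4)
    by (cases "u < v") (auto simp: power_add)
qed

lemma antisym_double_sum:
  fixes f :: "nat \<Rightarrow> nat \<Rightarrow> 'a::comm_ring_1"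
  assumes "finite A"
  shows "(\<forall>u\<in>A. \<forall>w\<in>A. f w u = - f u w) \<Longrightarrow> (\<forall>u\<in>A. f u u = 0) \<Longrightarrow> (\<Sum>u\<in>A. \<Sum>w\<in>A. f u w) = 0"
  using assms
proof (induction A rule: finite_induct)
  case empty then show ?case by simp
next
  case (insert a A)
  have faa: "f a a = 0" using insert.prems(2) by blast
  have "(\<Sum>u\<in>insert a A. \<Sum>w\<in>insert a A. f u w) = (\<Sum>u\<in>insert a A. f u a + (\<Sum>w\<in>A. f u w))"
    using insert.hyps by simp
  also have "\<dots> = (f a a + (\<Sum>w\<in>A. f a w)) + (\<Sum>u\<in>A. f u a + (\<Sum>w\<in>A. f u w))"
    using insert.hyps by simp
  also have "\<dots> = f a a + ((\<Sum>w\<in>A. f a w) + (\<Sum>u\<in>A. f u a)) + (\<Sum>u\<in>A. \<Sum>w\<in>A. f u w)"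
    by (simp only: sum.distrib add.assoc)
  also have "(\<Sum>w\<in>A. f a w) + (\<Sum>u\<in>A. f u a) = 0"
  proof -
    have h: "\<forall>w\<in>A. f w a = - f a w" using insert.prems(1) by blast
    have "(\<Sum>w\<in>A. f a w) + (\<Sum>u\<in>A. f u a) = (\<Sum>w\<in>A. f a w + f w a)"
      by (simp only: sum.distrib)
    also have "\<dots> = 0" by (rule sum.neutral) (use h in simp)
    finally show ?thesis .
  qed
  also have "(\<Sum>u\<in>A. \<Sum>w\<in>A. f u w) = 0"
    by (rule insert.IH) (use insert.prems in blast)+
  finally show ?case using faa by simp
qed

context cx
begin

lemma sd_sd: "sd (sd x) G = 0"
proof -
  define f where "f u w = (if u \<noteq> w \<and> insert w (insert u G) \<in> D then sg u (insert u G) * (sg w (insert w (insert u G)) * x (insert w (insert u G))) else 0)" for u w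
  have step: "(if insert u G \<in> D then sg u (insert u G) * sd x (insert u G) else 0) = (\<Sum>w\<in>V-G. f u w)"
    if u: "u \<in> V - G" for u
  proof (cases "insert u G \<in> D")
    case True
    have VG: "V - G = insert u (V - insert u G)" using u by auto
    have "(\<Sum>w\<in>V-G. f u w) = (\<Sum>w\<in>V - insert u G. f u w)"
      unfolding VG using finV by (subst sum.insert) (auto simp: f_def)
    also have "\<dots> = sg u (insert u G) * sd x (insert u G)"
      unfolding sd_def sum_distrib_left by (rule sum.cong) (auto simp: f_def)
    finally show ?thesis using True by simp
  next
    case False
    then have "\<And>w. insert w (insert u G) \<notin> D" using D_down by blast
    then show ?thesis using False by (simp add: f_def)
  qed
  have "sd (sd x) G = (\<Sum>u\<in>V-G. \<Sum>w\<in>V-G. f u w)"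
    unfolding sd_def[of "sd x"] using step by (intro sum.cong) auto
  also have "\<dots> = 0"
  proof (rule antisym_double_sum)
    show "finite (V - G)" using finV by simp
    show "\<forall>u\<in>V-G. f u u = 0" by (simp add: f_def)
    show "\<forall>u\<in>V-G. \<forall>w\<in>V-G. f w u = - f u w"
    proof (intro ballI)
      fix u w assume u: "u \<in> V - G" and w: "w \<in> V - G"
      have ins: "insert u (insert w G) = insert w (insert u G)" by auto
      show "f w u = - f u w"
      proof (cases "u \<noteq> w \<and> insert w (insert u G) \<in> D")
        case True
        then have fin: "finite G" "u \<noteq> w" using D_fin[of "insert w (insert u G)"] by auto
        have "sg w (insert w G) * sg u (insert u (insert w G)) = - (sg u (insert u G) * sg w (insert w (insert u G)) :: 'a)"
          by (rule sg_swap) (use fin u w in auto)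
        then have "sg w (insert w G) * sg u (insert u (insert w G)) * x (insert w (insert u G)) =
            - (sg u (insert u G) * sg w (insert w (insert u G))) * x (insert w (insert u G))"
          by (rule arg_cong[where f="\<lambda>t. t * x (insert w (insert u G))"])
        then have "sg w (insert w G) * (sg u (insert u (insert w G)) * x (insert w (insert u G))) =
            - (sg u (insert u G) * (sg w (insert w (insert u G)) * x (insert w (insert u G))))"
          by (simp only: mult.assoc minus_mult_left)
        then show ?thesis using True unfolding f_def ins by simp
      next
        case False
        then show ?thesis unfolding f_def ins by auto
      qed
    qed
  qed
  finally show ?thesis .
qed


lemma sd_zero[simp]: "sd (\<lambda>_. 0::'a::comm_ring_1) G = 0"
  unfolding sd_def by (intro sum.neutral) simp

lemma homotopy:
  assumes vV: "v \<in> V"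
    and cn: "\<forall>F\<in>D. P F \<longrightarrow> insert v F \<in> D \<and> P (insert v F)"
    and supp: "\<forall>F. x F \<noteq> 0 \<longrightarrow> F \<in> D \<and> P F"
  shows "sd (hh v x) G + hh v (sd x) G = x G"
proof (cases "v \<in> G")
  case False
  have "sd (hh v x) G = (\<Sum>u\<in>V-G. if u = v then (if insert v G \<in> D then x G else 0) else 0)"
    unfolding sd_def
  proof (rule sum.cong[OF refl])
    fix u assume u: "u \<in> V - G"
    show "(if insert u G \<in> D then sg u (insert u G) * hh v x (insert u G) else 0) =
          (if u = v then (if insert v G \<in> D then x G else 0) else 0)"
    proof (cases "u = v")
      case True
      have "insert v G - {v} = G" using False by auto
      then show ?thesis using True by (simp add: hh_def mult.assoc[symmetric])
    next
      case uv: False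
      then show ?thesis using False by (simp add: hh_def)
    qed
  qed
  also have "\<dots> = (if insert v G \<in> D then x G else 0)"
    using vV False finV by (simp add: sum.delta')
  also have "\<dots> = x G" using supp cn by auto
  finally show ?thesis using False by (simp add: hh_def)
next
  case True
  define G' where "G' = G - {v}"
  have G: "G = insert v G'" "v \<notin> G'" using True by (auto simp: G'_def)
  have VG: "V - G' = insert v (V - G)" using vV True by (auto simp: G'_def)
  have h1: "hh v (sd x) G = (if G \<in> D then x G else 0) +
      (\<Sum>u\<in>V-G. sg v G * (if insert u G' \<in> D then sg u (insert u G') * x (insert u G') else 0))"
  proof -
    have "hh v (sd x) G = sg v G * sd x G'" using True by (simp add: hh_def G'_def)
    also have "\<dots> = sg v G * ((if G \<in> D then sg v G * x G else 0) +
        (\<Sum>u\<in>V-G. if insert u G' \<in> D then sg u (insert u G') * x (insert u G') else 0))"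
      unfolding sd_def VG using finV G by (subst sum.insert) auto
    also have "\<dots> = (if G \<in> D then x G else 0) +
      (\<Sum>u\<in>V-G. sg v G * (if insert u G' \<in> D then sg u (insert u G') * x (insert u G') else 0))"
      by (simp add: distrib_left sum_distrib_left mult.assoc[symmetric])
    finally show ?thesis .
  qed
  have h2: "sd (hh v x) G = (\<Sum>u\<in>V-G. if insert u G \<in> D then sg u (insert u G) * (sg v (insert u G) * x (insert u G')) else 0)"
    unfolding sd_def
  proof (rule sum.cong[OF refl])
    fix u assume u: "u \<in> V - G"
    then have "insert u G - {v} = insert u G'" using G by auto
    then show "(if insert u G \<in> D then sg u (insert u G) * hh v x (insert u G) else 0) =
        (if insert u G \<in> D then sg u (insert u G) * (sg v (insert u G) * x (insert u G')) else 0)"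
      using True by (simp add: hh_def)
  qed
  have h3: "(if insert u G \<in> D then sg u (insert u G) * (sg v (insert u G) * x (insert u G')) else 0) +
      sg v G * (if insert u G' \<in> D then sg u (insert u G') * x (insert u G') else 0) = 0"
    if u: "u \<in> V - G" for u
  proof (cases "x (insert u G') = 0")
    case True then show ?thesis by simp
  next
    case False
    then have D1: "insert u G' \<in> D" "P (insert u G')" using supp by auto
    then have "insert v (insert u G') \<in> D" using cn by blast
    moreover have "insert v (insert u G') = insert u G" using G by auto
    ultimately have D2: "insert u G \<in> D" by simp
    have fin: "finite G'" using D_fin[OF D1(1)] by simp
    have uv: "u \<notin> G'" "u \<noteq> v" using u G by auto
    have sgz: "sg u (insert u (insert v G')) * sg v (insert u (insert v G')) + sg v (insert v G') * sg u (insert u G') = (0::'a)"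
      by (rule sg_homot) (use fin uv G in auto)
    have "(sg u (insert u G) * sg v (insert u G) + sg v G * sg u (insert u G')) * x (insert u G') = 0"
      using sgz G(1) by simp
    then show ?thesis using D1 D2 by (simp add: algebra_simps)
  qed
  have "sd (hh v x) G + hh v (sd x) G = (if G \<in> D then x G else 0) +
     (\<Sum>u\<in>V-G. (if insert u G \<in> D then sg u (insert u G) * (sg v (insert u G) * x (insert u G')) else 0) +
      sg v G * (if insert u G' \<in> D then sg u (insert u G') * x (insert u G') else 0))"
    unfolding h1 h2 sum.distrib by simp
  also have "\<dots> = (if G \<in> D then x G else 0)" using h3 by simp
  also have "\<dots> = x G" using supp by auto
  finally show ?thesis .
qed


end

lemma polyring_zero[simp]: "0 \<in> polyring n"
  by (simp add: polyring_def)

lemma polyring_add: "p \<in> polyring n \<Longrightarrow> q \<in> polyring n \<Longrightarrow> p + q \<in> polyring n"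
proof -
  assume p: "p \<in> polyring n" and q: "q \<in> polyring n"
  show "p + q \<in> polyring n" unfolding polyring_def mem_Collect_eq
  proof (intro ballI)
    fix m assume "m \<in> Poly_Mapping.keys (p + q)"
    then have "m \<in> Poly_Mapping.keys p \<or> m \<in> Poly_Mapping.keys q" using keys_add[of p q] by blast
    then show "Poly_Mapping.keys m \<subseteq> {..<n}" using p q unfolding polyring_def by blast
  qed
qed

lemma polyring_mult: "p \<in> polyring n \<Longrightarrow> q \<in> polyring n \<Longrightarrow> p * q \<in> polyring n"
proof -
  assume p: "p \<in> polyring n" and q: "q \<in> polyring n"
  show "p * q \<in> polyring n" unfolding polyring_def mem_Collect_eq
  proof (intro ballI)
    fix m assume "m \<in> Poly_Mapping.keys (p * q)"
    then obtain a b where ab: "m = a + b" "a \<in> Poly_Mapping.keys p" "b \<in> Poly_Mapping.keys q"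
      using keys_mult[of p q] by blast
    have "Poly_Mapping.keys a \<subseteq> {..<n}" "Poly_Mapping.keys b \<subseteq> {..<n}"
      using ab p q unfolding polyring_def by blast+
    then show "Poly_Mapping.keys m \<subseteq> {..<n}" using ab(1) keys_add_nat[of a b] by simp
  qed
qed
lemma polyring_sum: "(\<And>i. i \<in> A \<Longrightarrow> f i \<in> polyring n) \<Longrightarrow> sum f A \<in> polyring n"
proof (induction A rule: infinite_finite_induct)
  case (insert x F) then show ?case by (simp add: polyring_add)
qed auto

lemma polyring_single: "Poly_Mapping.keys d \<subseteq> {..<n} \<Longrightarrow> Poly_Mapping.single d c \<in> polyring n"
  by (simp add: polyring_def)

lemma polyring_one[simp]: "1 \<in> polyring n"
  by (simp add: polyring_def)

lemma add_minus_assoc_pm: "ple g f \<Longrightarrow> (c + f) - g = c + (f - (g :: nat \<Rightarrow>\<^sub>0 nat))"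
  unfolding ple_def by (intro pm_eqI) (simp add: lookup_add lookup_minus)

context cx
begin

lemma lab_keys: "F \<in> D \<Longrightarrow> Poly_Mapping.keys (lab e F) \<subseteq> {..<n}"
  using keys_lab[OF D_fin, of F e] D_sub e_keys by blast

lemma dd_supp:
  fixes z :: "nat set \<Rightarrow> 'a::comm_ring_1 mpoly"
  assumes "\<forall>F. z F \<noteq> 0 \<longrightarrow> F \<in> D \<and> card F = Suc (Suc i)"
  shows "\<forall>G. dd z G \<noteq> 0 \<longrightarrow> G \<in> D \<and> card G = Suc i"
proof (intro allI impI)
  fix G assume nz: "dd z G \<noteq> 0"
  have "\<exists>u. u \<in> V - G \<and> insert u G \<in> D \<and> z (insert u G) \<noteq> 0"
  proof (rule ccontr)
    assume "\<not> ?thesis"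
    then have "dd z G = 0" unfolding dd_def by (intro sum.neutral) auto
    then show False using nz by simp
  qed
  then obtain u where u: "u \<in> V - G" "insert u G \<in> D" "z (insert u G) \<noteq> 0" by blast
  then have "card (insert u G) = Suc (Suc i)" using assms by blast
  moreover have "finite G" using D_fin[OF u(2)] by simp
  ultimately show "G \<in> D \<and> card G = Suc i" using u D_down[OF u(2), of G] by auto
qed

lemma dd_polyring:
  assumes "\<forall>F. z F \<in> polyring n"
  shows "dd z G \<in> polyring n"
  unfolding dd_def
proof (rule polyring_sum)
  fix u assume "u \<in> V - G"
  show "(if insert u G \<in> D then Poly_Mapping.single (lab e (insert u G) - lab e G) (sg u (insert u G)) * z (insert u G) else 0) \<in> polyring n"
  proof (cases "insert u G \<in> D")
    case True
    have "Poly_Mapping.keys (lab e (insert u G) - lab e G) \<subseteq> {..<n}"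
      using lab_keys[OF True] keys_minus_sub by blast
    then show ?thesis using True assms by (simp add: polyring_mult polyring_single)
  qed simp
qed

lemma dd_zero[simp]: "dd (\<lambda>_. 0::'a::comm_ring_1 mpoly) = (\<lambda>_. 0)"
  unfolding dd_def by (simp only: mult_zero_right if_cancel sum.neutral_const)

lemma dd_dd: "dd (dd (z :: nat set \<Rightarrow> 'a::comm_ring_1 mpoly)) = (\<lambda>_. 0)"
proof (rule coef_eqI)
  fix G b
  have "coef (dd (dd z)) G b = sd (\<lambda>F. coef (dd z) F b) G" by (rule coef_dd[of "dd z" G b])
  also have "(\<lambda>F. coef (dd z) F b) = sd (\<lambda>F. coef z F b)" by (rule ext) (rule coef_dd[of z _ b])
  also have "sd (sd (\<lambda>F. coef z F b)) G = 0" by (rule sd_sd)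
  also have "(0::'a) = coef (\<lambda>_. 0::'a mpoly) G b" by (simp add: coef_def)
  finally show "coef (dd (dd z)) G b = coef (\<lambda>_. 0) G b" .
qed

end

context cx
begin

lemma exact_step:
  fixes z :: "nat set \<Rightarrow> 'a::comm_ring_1 mpoly"
  assumes supp: "\<forall>F. z F \<noteq> 0 \<longrightarrow> F \<in> D \<and> card F = Suc i"
    and cyc: "dd z = (\<lambda>_. 0)"
    and pol: "\<forall>F. z F \<in> polyring n"
  shows "\<exists>w. (\<forall>F. w F \<noteq> 0 \<longrightarrow> F \<in> D \<and> card F = Suc (Suc i)) \<and> (\<forall>F. w F \<in> polyring n) \<and> dd w = z"
proof -
  define xb where "xb b = (\<lambda>F. coef z F b)" for b
  define Cn where "Cn b v \<longleftrightarrow> v \<in> V \<and> (\<forall>F\<in>D. ple (lab e F) b \<longrightarrow> insert v F \<in> D \<and> ple (lab e (insert v F)) b)" for b v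
  define vb where "vb b = (SOME v. Cn b v)" for b
  define yb where "yb b = hh (vb b) (xb b)" for b
  have xsupp: "F \<in> D \<and> card F = Suc i \<and> ple (lab e F) b \<and> z F \<noteq> 0" if "xb b F \<noteq> 0" for b F
  proof -
    have "ple (lab e F) b" "z F \<noteq> 0" using that by (auto simp: xb_def coef_def split: if_splits)
    then show ?thesis using supp by blast
  qed
  have cone_vb: "Cn b (vb b)" if "xb b F \<noteq> 0" for b F
  proof -
    have F: "F \<in> D" "card F = Suc i" "ple (lab e F) b" using xsupp[OF that] by auto
    then have "F \<noteq> {}" by auto
    then have "\<exists>v. Cn b v" using cone[OF F(1) _ F(3)] unfolding Cn_def by blast
    then show ?thesis unfolding vb_def by (rule someI_ex)
  qed
  have sdx: "sd (xb b) G = 0" for b G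
  proof -
    have "sd (xb b) G = coef (dd z) G b" unfolding xb_def by (rule coef_dd[symmetric])
    also have "\<dots> = 0" using cyc by (simp add: coef_def)
    finally show ?thesis .
  qed
  have ysd: "sd (yb b) G = xb b G" for b G
  proof (cases "\<exists>F. xb b F \<noteq> 0")
    case True
    then obtain F where "xb b F \<noteq> 0" by blast
    then have C: "Cn b (vb b)" by (rule cone_vb)
    have "sd (hh (vb b) (xb b)) G + hh (vb b) (sd (xb b)) G = xb b G"
    proof (rule homotopy)
      show "vb b \<in> V" using C unfolding Cn_def by blast
      show "\<forall>F\<in>D. ple (lab e F) b \<longrightarrow> insert (vb b) F \<in> D \<and> ple (lab e (insert (vb b) F)) b"
        using C unfolding Cn_def by blast
      show "\<forall>F. xb b F \<noteq> 0 \<longrightarrow> F \<in> D \<and> ple (lab e F) b" using xsupp by blast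
    qed
    moreover have "hh (vb b) (sd (xb b)) G = 0" by (simp add: hh_def sdx)
    ultimately show ?thesis by (simp add: yb_def)
  next
    case False
    then have x0: "xb b = (\<lambda>_. 0)" by auto
    have "yb b = (\<lambda>_. 0)" unfolding yb_def x0 by (rule ext) (simp add: hh_def)
    then show ?thesis by (simp add: x0)
  qed
  have ysupp: "G \<in> D \<and> card G = Suc (Suc i) \<and> ple (lab e G) b \<and> vb b \<in> G \<and> xb b (G - {vb b}) \<noteq> 0"
    if "yb b G \<noteq> 0" for b G
  proof -
    have v: "vb b \<in> G" "xb b (G - {vb b}) \<noteq> 0" using that by (auto simp: yb_def hh_def split: if_splits)
    have X: "G - {vb b} \<in> D" "card (G - {vb b}) = Suc i" "ple (lab e (G - {vb b})) b"
      using xsupp[OF v(2)] by auto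
    have C: "Cn b (vb b)" by (rule cone_vb[OF v(2)])
    have G: "insert (vb b) (G - {vb b}) = G" using v(1) by auto
    have "G \<in> D \<and> ple (lab e G) b" using C X(1,3) G unfolding Cn_def by metis
    moreover have "card G = Suc (Suc i)"
      using X(1,2) D_fin[OF X(1)] v(1) by (metis card_Suc_Diff1 finite_Diff2 finite_insert G)
    ultimately show ?thesis using v by blast
  qed
  define w where "w G = Abs_poly_mapping (\<lambda>c. yb (c + lab e G) G)" for G
  have keysub: "c + (lab e G - lab e (G - {vb (c + lab e G)})) \<in> Poly_Mapping.keys (z (G - {vb (c + lab e G)}))"
    if "yb (c + lab e G) G \<noteq> 0" for c G
  proof -
    define b where "b = c + lab e G"
    define v where "v = vb b"
    have Y: "G \<in> D" "v \<in> G" "xb b (G - {v}) \<noteq> 0" using ysupp[OF that[folded b_def]] by (auto simp: v_def)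
    have m: "ple (lab e (G - {v})) (lab e G)" using D_fin[OF Y(1)] by (intro lab_mono) auto
    have "Poly_Mapping.lookup (z (G - {v})) (b - lab e (G - {v})) \<noteq> 0"
      using Y(3) by (simp add: xb_def coef_def split: if_splits)
    moreover have "b - lab e (G - {v}) = c + (lab e G - lab e (G - {v}))"
      unfolding b_def by (rule add_minus_assoc_pm[OF m])
    ultimately show ?thesis by (simp add: v_def b_def in_keys_iff)
  qed
  have fin: "finite {c. yb (c + lab e G) G \<noteq> 0}" for G
  proof (cases "finite G")
    case True
    have "{c. yb (c + lab e G) G \<noteq> 0} \<subseteq> (\<Union>v\<in>G. (\<lambda>c. c + (lab e G - lab e (G - {v}))) -` Poly_Mapping.keys (z (G - {v})))"
    proof
      fix c assume "c \<in> {c. yb (c + lab e G) G \<noteq> 0}"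
      then have yc: "yb (c + lab e G) G \<noteq> 0" by simp
      have "vb (c + lab e G) \<in> G" using ysupp[OF yc] by blast
      then show "c \<in> (\<Union>v\<in>G. (\<lambda>c. c + (lab e G - lab e (G - {v}))) -` Poly_Mapping.keys (z (G - {v})))"
        using keysub[OF yc] by blast
    qed
    moreover have "finite (\<Union>v\<in>G. (\<lambda>c. c + (lab e G - lab e (G - {v}))) -` Poly_Mapping.keys (z (G - {v})))"
    proof (intro finite_UN_I True)
      fix v
      show "finite ((\<lambda>c. c + (lab e G - lab e (G - {v}))) -` Poly_Mapping.keys (z (G - {v})))"
        by (rule finite_vimageI) (auto simp: inj_on_def)
    qed
    ultimately show ?thesis by (rule finite_subset)
  next
    case False
    have "{c. yb (c + lab e G) G \<noteq> 0} = {}"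
      using ysupp D_fin False by blast
    then show ?thesis by simp
  qed
  have lw: "Poly_Mapping.lookup (w G) c = yb (c + lab e G) G" for G c
    unfolding w_def using fin[of G] by simp
  have cw: "coef w G b = yb b G" for G b
  proof (cases "ple (lab e G) b")
    case True
    then show ?thesis by (simp add: coef_def lw add_minus_pm)
  next
    case False
    then have "yb b G = 0" using ysupp by blast
    then show ?thesis using False by (simp add: coef_def)
  qed
  have "dd w = z"
  proof (rule coef_eqI)
    fix G b
    have "coef (dd w) G b = sd (\<lambda>F. coef w F b) G" by (rule coef_dd)
    also have "(\<lambda>F. coef w F b) = yb b" using cw by (intro ext) simp
    also have "sd (yb b) G = xb b G" by (rule ysd)
    finally show "coef (dd w) G b = coef z G b" by (simp add: xb_def)
  qed
  moreover have "\<forall>F. w F \<noteq> 0 \<longrightarrow> F \<in> D \<and> card F = Suc (Suc i)"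
  proof (intro allI impI)
    fix F assume "w F \<noteq> 0"
    then obtain c where "Poly_Mapping.lookup (w F) c \<noteq> 0"
      by (metis lookup_zero poly_mapping_eqI)
    then have "yb (c + lab e F) F \<noteq> 0" by (simp add: lw)
    then show "F \<in> D \<and> card F = Suc (Suc i)" using ysupp by blast
  qed
  moreover have "\<forall>F. w F \<in> polyring n"
  proof
    fix G
    show "w G \<in> polyring n" unfolding polyring_def mem_Collect_eq
    proof (intro ballI)
      fix c assume "c \<in> Poly_Mapping.keys (w G)"
      then have yc: "yb (c + lab e G) G \<noteq> 0" by (simp add: lw in_keys_iff)
      define v where "v = vb (c + lab e G)"
      have "c + (lab e G - lab e (G - {v})) \<in> Poly_Mapping.keys (z (G - {v}))"
        using keysub[OF yc] by (simp add: v_def)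
      then have "Poly_Mapping.keys (c + (lab e G - lab e (G - {v}))) \<subseteq> {..<n}"
        using pol unfolding polyring_def by blast
      then show "Poly_Mapping.keys c \<subseteq> {..<n}" using keys_le_add[of c] by blast
    qed
  qed
  ultimately show ?thesis by blast
qed

end

context cx
begin

lemma dd_supp_gen:
  fixes z :: "nat set \<Rightarrow> 'a::comm_ring_1 mpoly"
  assumes "\<forall>F. z F \<noteq> 0 \<longrightarrow> F \<in> D \<and> card F = Suc k"
  shows "\<forall>G. dd z G \<noteq> 0 \<longrightarrow> G \<in> D \<and> card G = k"
proof (intro allI impI)
  fix G assume nz: "dd z G \<noteq> 0"
  have "\<exists>u. u \<in> V - G \<and> insert u G \<in> D \<and> z (insert u G) \<noteq> 0"
  proof (rule ccontr)
    assume "\<not> ?thesis"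
    then have "dd z G = 0" unfolding dd_def by (intro sum.neutral) auto
    then show False using nz by simp
  qed
  then obtain u where u: "u \<in> V - G" "insert u G \<in> D" "z (insert u G) \<noteq> 0" by blast
  then have "card (insert u G) = Suc k" using assms by blast
  moreover have "finite G" using D_fin[OF u(2)] by simp
  ultimately show "G \<in> D \<and> card G = k" using u D_down[OF u(2), of G] by auto
qed

definition faces :: "nat \<Rightarrow> nat set set" where
  "faces k = {F\<in>D. card F = k}"

definition rr :: "nat \<Rightarrow> nat" where
  "rr i = card (faces (Suc i))"

definition en :: "nat \<Rightarrow> nat \<Rightarrow> nat set" where
  "en i = (SOME h. bij_betw h {0..<rr i} (faces (Suc i)))"

definition Dm :: "nat set \<Rightarrow> nat set \<Rightarrow> 'a::comm_ring_1 mpoly" where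
  "Dm G F = (\<Sum>u\<in>V-G. if F = insert u G then Poly_Mapping.single (lab e F - lab e G) (sg u F) else 0)"

definition AA :: "nat \<Rightarrow> nat \<Rightarrow> nat \<Rightarrow> 'a::comm_ring_1 mpoly" where
  "AA i j k = Dm (en (i - 1) j) (en i k)"

definition eps :: "nat \<Rightarrow> 'a::comm_ring_1 mpoly" where
  "eps k = Dm {} (en 0 k)"

definition tc :: "nat \<Rightarrow> (nat \<Rightarrow> 'a::comm_ring_1 mpoly) \<Rightarrow> nat set \<Rightarrow> 'a mpoly" where
  "tc i v F = (if F \<in> faces (Suc i) then v (inv_into {0..<rr i} (en i) F) else 0)"

definition vc :: "nat \<Rightarrow> (nat set \<Rightarrow> 'a::comm_ring_1 mpoly) \<Rightarrow> nat \<Rightarrow> 'a mpoly" where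
  "vc i z = (\<lambda>k. if k < rr i then z (en i k) else 0)"

lemma faces_fin: "finite (faces k)"
proof -
  have "faces k \<subseteq> Pow V" using D_sub by (auto simp: faces_def)
  then show ?thesis using finV finite_subset by blast
qed

lemma en_bij: "bij_betw (en i) {0..<rr i} (faces (Suc i))"
proof -
  have "\<exists>h. bij_betw h {0..<rr i} (faces (Suc i))"
    unfolding rr_def by (rule ex_bij_betw_nat_finite[OF faces_fin])
  then show ?thesis unfolding en_def by (rule someI_ex)
qed

lemma en_in: "k < rr i \<Longrightarrow> en i k \<in> faces (Suc i)"
  using en_bij[of i] by (auto simp: bij_betw_def)

lemma inv_en: "F \<in> faces (Suc i) \<Longrightarrow> inv_into {0..<rr i} (en i) F < rr i \<and> en i (inv_into {0..<rr i} (en i) F) = F"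
proof -
  assume F: "F \<in> faces (Suc i)"
  have b: "bij_betw (en i) {0..<rr i} (faces (Suc i))" by (rule en_bij)
  then have "inv_into {0..<rr i} (en i) F \<in> {0..<rr i}"
    using F by (metis bij_betw_def inv_into_into)
  moreover have "en i (inv_into {0..<rr i} (en i) F) = F"
    using b F by (metis bij_betw_def f_inv_into_f)
  ultimately show ?thesis by simp
qed

lemma inv_en2: "k < rr i \<Longrightarrow> inv_into {0..<rr i} (en i) (en i k) = k"
  using en_bij[of i] by (metis atLeastLessThan_iff bij_betw_def inv_into_f_f zero_le)

lemma Dsum:
  assumes G: "G \<in> D"
  shows "(\<Sum>F\<in>faces (Suc (card G)). Dm G F * z F) = dd z G"
proof -
  have finG: "finite G" using D_fin[OF G] .
  have "(\<Sum>F\<in>faces (Suc (card G)). Dm G F * z F) =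
      (\<Sum>F\<in>faces (Suc (card G)). \<Sum>u\<in>V-G. if F = insert u G then Poly_Mapping.single (lab e (insert u G) - lab e G) (sg u (insert u G)) * z (insert u G) else 0)"
    unfolding Dm_def sum_distrib_right by (intro sum.cong refl) auto
  also have "\<dots> = (\<Sum>u\<in>V-G. \<Sum>F\<in>faces (Suc (card G)). if F = insert u G then Poly_Mapping.single (lab e (insert u G) - lab e G) (sg u (insert u G)) * z (insert u G) else 0)"
    by (rule sum.swap)
  also have "\<dots> = dd z G"
    unfolding dd_def
  proof (intro sum.cong refl)
    fix u assume u: "u \<in> V - G"
    have "insert u G \<in> faces (Suc (card G)) \<longleftrightarrow> insert u G \<in> D"
      using u finG by (simp add: faces_def)
    then show "(\<Sum>F\<in>faces (Suc (card G)). if F = insert u G then Poly_Mapping.single (lab e (insert u G) - lab e G) (sg u (insert u G)) * z (insert u G) else 0) =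
      (if insert u G \<in> D then Poly_Mapping.single (lab e (insert u G) - lab e G) (sg u (insert u G)) * z (insert u G) else 0)"
      using faces_fin by (simp add: sum.delta')
  qed
  finally show ?thesis .
qed

lemma tc_supp: "\<forall>F. tc i v F \<noteq> 0 \<longrightarrow> F \<in> D \<and> card F = Suc i"
  by (auto simp: tc_def faces_def split: if_splits)

lemma mapply_eq:
  "mapply (AA (Suc i)) (rr i) (rr (Suc i)) u = vc i (dd (tc (Suc i) u))"
proof
  fix j
  show "mapply (AA (Suc i)) (rr i) (rr (Suc i)) u j = vc i (dd (tc (Suc i) u)) j"
  proof (cases "j < rr i")
    case True
    have G: "en i j \<in> D" "card (en i j) = Suc i" using en_in[OF True] by (auto simp: faces_def)
    have "(\<Sum>k<rr (Suc i). AA (Suc i) j k * u k) = (\<Sum>k\<in>{0..<rr (Suc i)}. Dm (en i j) (en (Suc i) k) * tc (Suc i) u (en (Suc i) k))"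
      unfolding AA_def lessThan_atLeast0
      by (intro sum.cong refl) (simp add: tc_def en_in inv_en2)
    also have "\<dots> = (\<Sum>F\<in>faces (Suc (Suc i)). Dm (en i j) F * tc (Suc i) u F)"
      by (rule sum.reindex_bij_betw[OF en_bij])
    also have "\<dots> = dd (tc (Suc i) u) (en i j)"
      using Dsum[OF G(1)] G(2) by simp
    finally show ?thesis using True by (simp add: mapply_def vc_def)
  next
    case False
    then show ?thesis by (simp add: mapply_def vc_def)
  qed
qed

lemma eps_eq: "(\<Sum>k<rr 0. eps k * v k) = dd (tc 0 v) {}"
proof -
  have "(\<Sum>k<rr 0. eps k * v k) = (\<Sum>k\<in>{0..<rr 0}. Dm {} (en 0 k) * tc 0 v (en 0 k))"
    unfolding eps_def lessThan_atLeast0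
    by (intro sum.cong refl) (simp add: tc_def en_in inv_en2)
  also have "\<dots> = (\<Sum>F\<in>faces (Suc 0). Dm {} F * tc 0 v F)"
    by (rule sum.reindex_bij_betw[OF en_bij])
  also have "\<dots> = dd (tc 0 v) {}"
    using Dsum[OF D_empty] by simp
  finally show ?thesis .
qed

lemma tc_pol: "v \<in> vecs n (rr i) \<Longrightarrow> tc i v F \<in> polyring n"
  by (auto simp: tc_def vecs_def inv_en)

lemma vc_tc: "v \<in> vecs n (rr i) \<Longrightarrow> vc i (tc i v) = v"
  by (rule ext) (auto simp: vc_def tc_def vecs_def en_in inv_en2)

lemma tc_vc:
  assumes "\<forall>F. z F \<noteq> 0 \<longrightarrow> F \<in> D \<and> card F = Suc i"
  shows "tc i (vc i z) = z"
proof
  fix F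
  show "tc i (vc i z) F = z F"
  proof (cases "F \<in> faces (Suc i)")
    case True
    then show ?thesis using inv_en[OF True] by (simp add: tc_def vc_def)
  next
    case False
    then show ?thesis using assms by (auto simp: tc_def faces_def)
  qed
qed

lemma vc_vecs: "\<forall>F. z F \<in> polyring n \<Longrightarrow> vc i z \<in> vecs n (rr i)"
  by (simp add: vc_def vecs_def)

lemma vc_zero[simp]: "vc i (\<lambda>_. 0) = (\<lambda>_. 0)"
  by (rule ext) (simp add: vc_def)

lemma tc_zero[simp]: "tc i (\<lambda>_. 0) = (\<lambda>_. 0)"
  by (rule ext) (simp add: tc_def)

lemma Dm_pol: "F \<in> D \<Longrightarrow> Dm G F \<in> polyring n"
  unfolding Dm_def
proof (intro polyring_sum)
  fix u assume F: "F \<in> D"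
  have "Poly_Mapping.keys (lab e F - lab e G) \<subseteq> {..<n}"
    using lab_keys[OF F] keys_minus_sub by blast
  note K = this
  show "(if F = insert u G then Poly_Mapping.single (lab e F - lab e G) (sg u F) else 0) \<in> polyring n"
  proof (cases "F = insert u G")
    case True
    show ?thesis unfolding if_P[OF True] by (rule polyring_single[OF K])
  qed simp
qed

end

lemma ig_zero: "0 \<in> ideal_gen n X"
  unfolding ideal_gen_def by (rule CollectI, rule exI[of _ "{}"]) auto

lemma ig_add:
  assumes "a \<in> ideal_gen n X" "b \<in> ideal_gen n X"
  shows "a + b \<in> ideal_gen n X"
proof -
  obtain H1 c1 where 1: "a = (\<Sum>g\<in>H1. c1 g * g)" "finite H1" "H1 \<subseteq> X" "\<forall>g\<in>H1. c1 g \<in> polyring n"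
    using assms(1) unfolding ideal_gen_def by blast
  obtain H2 c2 where 2: "b = (\<Sum>g\<in>H2. c2 g * g)" "finite H2" "H2 \<subseteq> X" "\<forall>g\<in>H2. c2 g \<in> polyring n"
    using assms(2) unfolding ideal_gen_def by blast
  define c where "c g = (if g \<in> H1 then c1 g else 0) + (if g \<in> H2 then c2 g else 0)" for g
  have "(\<Sum>g\<in>H1 \<union> H2. c g * g) = (\<Sum>g\<in>H1 \<union> H2. (if g \<in> H1 then c1 g * g else 0)) + (\<Sum>g\<in>H1 \<union> H2. (if g \<in> H2 then c2 g * g else 0))"
    unfolding c_def by (simp add: sum.distrib[symmetric] distrib_right if_distrib[of "\<lambda>x. x * _"] cong: if_cong)
  also have "(\<Sum>g\<in>H1 \<union> H2. (if g \<in> H1 then c1 g * g else 0)) = (\<Sum>g\<in>H1. c1 g * g)"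
    using 1(2) 2(2) by (simp add: sum.If_cases Int_absorb1)
  also have "(\<Sum>g\<in>H1 \<union> H2. (if g \<in> H2 then c2 g * g else 0)) = (\<Sum>g\<in>H2. c2 g * g)"
    using 1(2) 2(2) by (simp add: sum.If_cases Int_absorb1)
  finally have "a + b = (\<Sum>g\<in>H1 \<union> H2. c g * g)" using 1(1) 2(1) by simp
  moreover have "\<forall>g\<in>H1 \<union> H2. c g \<in> polyring n"
    using 1(4) 2(4) by (auto simp: c_def intro!: polyring_add)
  ultimately show ?thesis using 1(2,3) 2(2,3) unfolding ideal_gen_def by blast
qed

lemma ig_mult:
  assumes "p \<in> polyring n" "a \<in> ideal_gen n X"
  shows "p * a \<in> ideal_gen n X"
proof -
  obtain H c where 1: "a = (\<Sum>g\<in>H. c g * g)" "finite H" "H \<subseteq> X" "\<forall>g\<in>H. c g \<in> polyring n"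
    using assms(2) unfolding ideal_gen_def by blast
  have "p * a = (\<Sum>g\<in>H. (p * c g) * g)" unfolding 1(1) by (simp add: sum_distrib_left mult.assoc)
  moreover have "\<forall>g\<in>H. p * c g \<in> polyring n" using 1(4) assms(1) by (simp add: polyring_mult)
  ultimately show ?thesis using 1(2,3) unfolding ideal_gen_def mem_Collect_eq
    by (intro exI[of _ H] exI[of _ "\<lambda>g. p * c g"]) simp
qed

lemma ig_gen:
  assumes "g \<in> X"
  shows "g \<in> ideal_gen n X"
proof -
  have "g = (\<Sum>h\<in>{g}. (\<lambda>_. 1) h * h)" by simp
  then show ?thesis using assms unfolding ideal_gen_def mem_Collect_eq
    by (intro exI[of _ "{g}"] exI[of _ "\<lambda>_. 1"]) simp
qed

lemma ig_sum:
  "(\<And>i. i \<in> A \<Longrightarrow> f i \<in> ideal_gen n X) \<Longrightarrow> sum f A \<in> ideal_gen n X"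
proof (induction A rule: infinite_finite_induct)
  case (infinite A) then show ?case by (simp add: ig_zero)
next
  case empty then show ?case by (simp add: ig_zero)
next
  case (insert x F) then show ?case by (simp add: ig_add)
qed

lemma ig_sub:
  assumes "X \<subseteq> ideal_gen n Y"
  shows "ideal_gen n X \<subseteq> ideal_gen n Y"
proof
  fix a assume "a \<in> ideal_gen n X"
  then obtain H c where 1: "a = (\<Sum>g\<in>H. c g * g)" "finite H" "H \<subseteq> X" "\<forall>g\<in>H. c g \<in> polyring n"
    unfolding ideal_gen_def by blast
  show "a \<in> ideal_gen n Y" unfolding 1(1)
    by (rule ig_sum) (use 1(3,4) assms in \<open>auto intro!: ig_mult\<close>)
qed

lemma ig_mono: "X \<subseteq> Y \<Longrightarrow> ideal_gen n X \<subseteq> ideal_gen n Y"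
  by (rule ig_sub) (use ig_gen in blast)

context cx
begin

lemma dd_empty_formula: "dd z {} = (\<Sum>u\<in>V. if {u} \<in> D then Poly_Mapping.single (e u) 1 * z {u} else 0)"
proof -
  have s: "sg u {u} = 1" for u
  proof -
    have E: "{w \<in> {u}. w < u} = {}" by auto
    show ?thesis unfolding sg_def by (subst E) simp
  qed
  show ?thesis unfolding dd_def by (intro sum.cong) (auto simp: s)
qed

lemma image_eps:
  "(\<lambda>v. \<Sum>k<rr 0. eps k * v k) ` vecs n (rr 0) = ideal_gen n ((\<lambda>u. Poly_Mapping.single (e u) (1::'a::comm_ring_1)) ` {u\<in>V. {u} \<in> D})"
  (is "?L = ideal_gen n (?Y ` ?U)")
proof
  show "?L \<subseteq> ideal_gen n (?Y ` ?U)"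
  proof
    fix x assume "x \<in> ?L"
    then obtain v where v: "v \<in> vecs n (rr 0)" "x = (\<Sum>k<rr 0. eps k * v k)" by blast
    have "x = dd (tc 0 v) {}" using v(2) eps_eq[of v] by simp
    also have "\<dots> = (\<Sum>u\<in>V. if {u} \<in> D then ?Y u * tc 0 v {u} else 0)"
      by (rule dd_empty_formula)
    also have "\<dots> \<in> ideal_gen n (?Y ` ?U)"
    proof (rule ig_sum)
      fix u assume u: "u \<in> V"
      show "(if {u} \<in> D then ?Y u * tc 0 v {u} else 0) \<in> ideal_gen n (?Y ` ?U)"
      proof (cases "{u} \<in> D")
        case True
        have "tc 0 v {u} * ?Y u \<in> ideal_gen n (?Y ` ?U)"
          by (rule ig_mult[OF tc_pol[OF v(1)] ig_gen]) (use u True in auto)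
        then show ?thesis using True by (simp add: mult.commute)
      qed (simp add: ig_zero)
    qed
    finally show "x \<in> ideal_gen n (?Y ` ?U)" .
  qed
next
  show "ideal_gen n (?Y ` ?U) \<subseteq> ?L"
  proof
    fix x assume "x \<in> ideal_gen n (?Y ` ?U)"
    then obtain H c where H: "x = (\<Sum>g\<in>H. c g * g)" "finite H" "H \<subseteq> ?Y ` ?U" "\<forall>g\<in>H. c g \<in> polyring n"
      unfolding ideal_gen_def by blast
    define \<sigma> where "\<sigma> = inv_into ?U ?Y"
    have \<sigma>1: "\<sigma> g \<in> ?U" "?Y (\<sigma> g) = g" if "g \<in> H" for g
    proof -
      have "g \<in> ?Y ` ?U" using H(3) that by blast
      then show "\<sigma> g \<in> ?U" "?Y (\<sigma> g) = g" unfolding \<sigma>_def by (rule inv_into_into, rule f_inv_into_f)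
    qed
    have inj: "inj_on \<sigma> H" unfolding \<sigma>_def by (rule inj_on_inv_into[OF H(3)])
    define z where "z F = (if F \<in> faces 1 then (if the_elem F \<in> \<sigma> ` H then c (?Y (the_elem F)) else 0) else 0)" for F
    have zsupp: "\<forall>F. z F \<noteq> 0 \<longrightarrow> F \<in> D \<and> card F = Suc 0"
      by (auto simp: z_def faces_def split: if_splits)
    have zpol: "\<forall>F. z F \<in> polyring n"
      using H(4) \<sigma>1 by (auto simp: z_def)
    define v where "v = vc 0 z"
    have vV: "v \<in> vecs n (rr 0)" unfolding v_def by (rule vc_vecs[OF zpol])
    have tcv: "tc 0 v = z" unfolding v_def by (rule tc_vc[OF zsupp])
    have zu: "z {u} = (if {u} \<in> D \<and> u \<in> \<sigma> ` H then c (?Y u) else 0)" for u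
      by (simp add: z_def faces_def)
    have "(\<Sum>k<rr 0. eps k * v k) = (\<Sum>u\<in>V. if {u} \<in> D then ?Y u * z {u} else 0)"
      using eps_eq[of v] dd_empty_formula[of z] tcv by simp
    also have "\<dots> = (\<Sum>u\<in>V. if u \<in> \<sigma> ` H then ?Y u * c (?Y u) else 0)"
    proof (intro sum.cong refl)
      fix u assume "u \<in> V"
      show "(if {u} \<in> D then ?Y u * z {u} else 0) = (if u \<in> \<sigma> ` H then ?Y u * c (?Y u) else 0)"
        using \<sigma>1 by (auto simp: zu)
    qed
    also have "\<dots> = (\<Sum>u\<in>\<sigma> ` H. ?Y u * c (?Y u))"
    proof -
      have "\<sigma> ` H \<subseteq> V" using \<sigma>1 by auto
      then show ?thesis using finV by (simp add: sum.If_cases Int_absorb1)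
    qed
    also have "\<dots> = (\<Sum>g\<in>H. ?Y (\<sigma> g) * c (?Y (\<sigma> g)))"
      by (rule sum.reindex[OF inj, unfolded comp_def])
    also have "\<dots> = x" unfolding H(1) using \<sigma>1 by (intro sum.cong refl) (simp add: mult.commute)
    finally show "x \<in> ?L" using vV by (metis (mono_tags, lifting) image_eqI)
  qed
qed

theorem cx_res:
  assumes len: "\<forall>F\<in>D. card F \<le> Suc len"
  shows "free_resolution n (ideal_gen n ((\<lambda>u. Poly_Mapping.single (e u) (1::'a::comm_ring_1)) ` {u\<in>V. {u} \<in> D})) len rr AA (eps :: nat \<Rightarrow> 'a mpoly)"
proof -
  have kerK: "(if i = 0 then (\<Sum>k<rr 0. eps k * v k) = 0 else mapply (AA i) (rr (i - 1)) (rr i) v = (\<lambda>_. 0))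
      \<longleftrightarrow> dd (tc i v) = (\<lambda>_. (0::'a mpoly))" for i and v :: "nat \<Rightarrow> 'a mpoly"
  proof (cases i)
    case 0
    have S: "\<forall>G. dd (tc 0 v) G \<noteq> 0 \<longrightarrow> G \<in> D \<and> card G = 0"
      by (rule dd_supp_gen) (use tc_supp in auto)
    have "dd (tc 0 v) {} = 0 \<longleftrightarrow> dd (tc 0 v) = (\<lambda>_. 0)"
    proof
      assume a: "dd (tc 0 v) {} = 0"
      show "dd (tc 0 v) = (\<lambda>_. 0)"
      proof
        fix G show "dd (tc 0 v) G = 0"
        proof (cases "G = {}")
          case False
          then show ?thesis using S D_fin by (metis card_0_eq)
        qed (use a in simp)
      qed
    qed simp
    then show ?thesis using 0 eps_eq[of v] by simp
  next
    case (Suc i')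
    have S: "\<forall>G. dd (tc (Suc i') v) G \<noteq> 0 \<longrightarrow> G \<in> D \<and> card G = Suc i'"
      by (rule dd_supp_gen) (use tc_supp in auto)
    have "mapply (AA i) (rr (i - 1)) (rr i) v = vc i' (dd (tc (Suc i') v))"
      using mapply_eq[of i' v] Suc by simp
    moreover have "vc i' (dd (tc (Suc i') v)) = (\<lambda>_. 0) \<longleftrightarrow> dd (tc (Suc i') v) = (\<lambda>_. 0)"
      using tc_vc[OF S] by (metis tc_zero vc_zero)
    ultimately show ?thesis using Suc by simp
  qed
  have exact: "{v \<in> vecs n (rr i). dd (tc i v) = (\<lambda>_. (0::'a mpoly))}
      = (if i < len then mapply (AA (Suc i)) (rr i) (rr (Suc i)) ` vecs n (rr (Suc i)) else {\<lambda>_. 0})"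
    if "i \<le> len" for i
  proof (cases "i < len")
    case True
    have "{v \<in> vecs n (rr i). dd (tc i v) = (\<lambda>_. 0)} = mapply (AA (Suc i)) (rr i) (rr (Suc i)) ` vecs n (rr (Suc i))"
    proof
      show "{v \<in> vecs n (rr i). dd (tc i v) = (\<lambda>_. 0)} \<subseteq> mapply (AA (Suc i)) (rr i) (rr (Suc i)) ` vecs n (rr (Suc i))"
      proof
        fix v assume "v \<in> {v \<in> vecs n (rr i). dd (tc i v) = (\<lambda>_. 0)}"
        then have v: "v \<in> vecs n (rr i)" "dd (tc i v) = (\<lambda>_. 0)" by auto
        obtain w where w: "\<forall>F. w F \<noteq> 0 \<longrightarrow> F \<in> D \<and> card F = Suc (Suc i)" "\<forall>F. w F \<in> polyring n" "dd w = tc i v"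
          using exact_step[OF tc_supp v(2)] tc_pol[OF v(1)] by blast
        have "mapply (AA (Suc i)) (rr i) (rr (Suc i)) (vc (Suc i) w) = v"
          using mapply_eq[of i "vc (Suc i) w"] tc_vc[OF w(1)] w(3) vc_tc[OF v(1)] by simp
        moreover have "vc (Suc i) w \<in> vecs n (rr (Suc i))" by (rule vc_vecs[OF w(2)])
        ultimately show "v \<in> mapply (AA (Suc i)) (rr i) (rr (Suc i)) ` vecs n (rr (Suc i))" by force
      qed
    next
      show "mapply (AA (Suc i)) (rr i) (rr (Suc i)) ` vecs n (rr (Suc i)) \<subseteq> {v \<in> vecs n (rr i). dd (tc i v) = (\<lambda>_. 0)}"
      proof
        fix v assume "v \<in> mapply (AA (Suc i)) (rr i) (rr (Suc i)) ` vecs n (rr (Suc i))"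
        then obtain u where u: "u \<in> vecs n (rr (Suc i))" "v = mapply (AA (Suc i)) (rr i) (rr (Suc i)) u" by blast
        define y where "y = tc (Suc i) u"
        have vy: "v = vc i (dd y)" using u(2) mapply_eq by (simp add: y_def)
        have "\<forall>F. tc (Suc i) u F \<in> polyring n" using tc_pol[OF u(1)] by blast
        then have ypol: "\<forall>F. dd y F \<in> polyring n" unfolding y_def using dd_polyring by blast
        have ysupp: "\<forall>G. dd y G \<noteq> 0 \<longrightarrow> G \<in> D \<and> card G = Suc i"
          unfolding y_def by (rule dd_supp_gen) (use tc_supp in auto)
        have "v \<in> vecs n (rr i)" unfolding vy by (rule vc_vecs[OF ypol])
        moreover have "dd (tc i v) = (\<lambda>_. 0)" unfolding vy tc_vc[OF ysupp] by (rule dd_dd)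
        ultimately show "v \<in> {v \<in> vecs n (rr i). dd (tc i v) = (\<lambda>_. 0)}" by simp
      qed
    qed
    then show ?thesis using True by simp
  next
    case False
    then have i: "i = len" using that by simp
    have "{v \<in> vecs n (rr i). dd (tc i v) = (\<lambda>_. 0)} = {\<lambda>_. 0}"
    proof
      show "{v \<in> vecs n (rr i). dd (tc i v) = (\<lambda>_. 0)} \<subseteq> {\<lambda>_. 0}"
      proof
        fix v assume "v \<in> {v \<in> vecs n (rr i). dd (tc i v) = (\<lambda>_. 0)}"
        then have v: "v \<in> vecs n (rr i)" "dd (tc i v) = (\<lambda>_. 0)" by auto
        obtain w where w: "\<forall>F. w F \<noteq> 0 \<longrightarrow> F \<in> D \<and> card F = Suc (Suc i)" "dd w = tc i v"
          using exact_step[OF tc_supp v(2)] tc_pol[OF v(1)] by blast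
        have "w = (\<lambda>_. 0)"
        proof
          fix F show "w F = 0" using w(1) len i by fastforce
        qed
        then have "tc i v = (\<lambda>_. 0)" using w(2) by simp
        then show "v \<in> {\<lambda>_. 0}" using vc_tc[OF v(1)] by simp
      qed
    next
      show "{\<lambda>_. 0} \<subseteq> {v \<in> vecs n (rr i). dd (tc i v) = (\<lambda>_. 0)}"
        by (simp add: vecs_def)
    qed
    then show ?thesis using False by simp
  qed
  show ?thesis unfolding free_resolution_def
  proof (intro conjI)
    show "\<forall>i\<in>{1..len}. \<forall>j<rr (i - 1). \<forall>k<rr i. AA i j k \<in> polyring n"
      using en_in Dm_pol by (auto simp: AA_def faces_def)
    show "\<forall>k<rr 0. eps k \<in> polyring n"
      using en_in Dm_pol by (auto simp: eps_def faces_def)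
    show "(\<lambda>v. \<Sum>k<rr 0. eps k * v k) ` vecs n (rr 0) = ideal_gen n ((\<lambda>u. Poly_Mapping.single (e u) 1) ` {u \<in> V. {u} \<in> D})"
      by (rule image_eps)
    show "\<forall>i\<le>len. {v \<in> vecs n (rr i).
           if i = 0 then (\<Sum>k<rr 0. eps k * v k) = 0
           else mapply (AA i) (rr (i - 1)) (rr i) v = (\<lambda>_. (0::'a mpoly))} =
       (if i < len then mapply (AA (Suc i)) (rr i) (rr (Suc i)) ` vecs n (rr (Suc i)) else {\<lambda>_. 0})"
    proof (intro allI impI)
      fix i assume i: "i \<le> len"
      show "{v \<in> vecs n (rr i).
           if i = 0 then (\<Sum>k<rr 0. eps k * v k) = 0
           else mapply (AA i) (rr (i - 1)) (rr i) v = (\<lambda>_. (0::'a mpoly))} =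
       (if i < len then mapply (AA (Suc i)) (rr i) (rr (Suc i)) ` vecs n (rr (Suc i)) else {\<lambda>_. 0})"
      proof -
        have "{v \<in> vecs n (rr i).
           if i = 0 then (\<Sum>k<rr 0. eps k * v k) = 0
           else mapply (AA i) (rr (i - 1)) (rr i) v = (\<lambda>_. (0::'a mpoly))} = {v \<in> vecs n (rr i). dd (tc i v) = (\<lambda>_. 0)}"
        proof (rule Collect_cong)
          fix v :: "nat \<Rightarrow> 'a mpoly"
          show "(v \<in> vecs n (rr i) \<and> (if i = 0 then (\<Sum>k<rr 0. eps k * v k) = 0
           else mapply (AA i) (rr (i - 1)) (rr i) v = (\<lambda>_. 0))) = (v \<in> vecs n (rr i) \<and> dd (tc i v) = (\<lambda>_. 0))"
            using kerK[of i v] by simp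
        qed
        then show ?thesis by (rule trans[OF _ exact[OF i]])
      qed
    qed
  qed
qed

end

lemma card_pairs: "card {(i::nat, j). i < j \<and> j < q} = q choose 2"
proof (induction q)
  case 0 then show ?case by simp
next
  case (Suc q)
  have "{(i::nat, j). i < j \<and> j < Suc q} = {(i, j). i < j \<and> j < q} \<union> (\<lambda>i. (i, q)) ` {..<q}" by auto
  moreover have "finite {(i::nat, j). i < j \<and> j < q}"
    by (rule finite_subset[of _ "{..<q} \<times> {..<q}"]) auto
  moreover have "{(i::nat, j). i < j \<and> j < q} \<inter> (\<lambda>i. (i, q)) ` {..<q} = {}" by auto
  moreover have "card ((\<lambda>i. (i, q)) ` {..<q}) = q" by (simp add: card_image inj_on_def)
  ultimately have "card {(i::nat, j). i < j \<and> j < Suc q} = (q choose 2) + q"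
    using Suc by (simp add: card_Un_disjoint)
  also have "\<dots> = Suc q choose 2"
    by (simp add: numeral_2_eq_2 binomial_Suc_Suc)
  finally show ?case .
qed

lemma card_off:
  assumes "0 < q"
  shows "card {p::nat. p < q * q \<and> p div q < p mod q} = q choose 2"
proof -
  have "{p::nat. p < q * q \<and> p div q < p mod q} = (\<lambda>(i, j). i * q + j) ` {(i, j). i < j \<and> j < q}"
  proof (rule set_eqI, rule iffI)
    fix p assume "p \<in> {p::nat. p < q * q \<and> p div q < p mod q}"
    then have h: "p div q < p mod q" "p mod q < q"
      using assms by auto
    show "p \<in> (\<lambda>(i, j). i * q + j) ` {(i, j). i < j \<and> j < q}"
    proof (rule image_eqI[where x="(p div q, p mod q)"])
      show "p = (\<lambda>(i, j). i * q + j) (p div q, p mod q)" by simp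
      show "(p div q, p mod q) \<in> {(i, j). i < j \<and> j < q}" using h by simp
    qed
  next
    fix p assume "p \<in> (\<lambda>(i, j). i * q + j) ` {(i, j). i < j \<and> j < q}"
    then obtain x where x: "x \<in> {(i, j). i < j \<and> j < q}" "p = (\<lambda>(i, j). i * q + j) x" by (rule imageE)
    obtain i j where "x = (i, j)" by (cases x)
    then have ij: "p = i * q + j" "i < j" "j < q" using x by simp_all
    have "p div q = i" "p mod q = j" using ij(1,3) by simp_all
    moreover have "p < q * q"
    proof -
      have "i * q + j < i * q + q" using ij by simp
      also have "\<dots> = Suc i * q" by simp
      also have "\<dots> \<le> q * q" using ij by (intro mult_right_mono) auto
      finally show ?thesis unfolding ij(1) .
    qed
    ultimately show "p \<in> {p::nat. p < q * q \<and> p div q < p mod q}" using ij by simp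
  qed
  moreover have inj: "inj_on (\<lambda>(i, j). i * q + j) {(i::nat, j). i < j \<and> j < q}"
  proof (rule inj_onI, clarify)
    fix i j i' j' :: nat
    assume h: "i * q + j = i' * q + j'" "i < j" "j < q" "i' < j'" "j' < q"
    have "(i * q + j) mod q = j" using h(3) by simp
    moreover have "(i' * q + j') mod q = j'" using h(5) by simp
    moreover have "(i * q + j) div q = i" using h(3) by simp
    moreover have "(i' * q + j') div q = i'" using h(5) by simp
    ultimately show "i = i' \<and> j = j'" unfolding h(1) by simp
  qed
  ultimately show ?thesis using card_image[OF inj] card_pairs[of q] by simp
qed

lemma ideal_sq_gen:
  assumes "G \<subseteq> polyring n"
  shows "ideal_sq n (ideal_gen n G) = ideal_gen n {a * b | a b. a \<in> G \<and> b \<in> G}"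
  (is "_ = ideal_gen n ?GG")
proof
  show "ideal_gen n ?GG \<subseteq> ideal_sq n (ideal_gen n G)"
    unfolding ideal_sq_def by (rule ig_mono) (use ig_gen in blast)
next
  show "ideal_sq n (ideal_gen n G) \<subseteq> ideal_gen n ?GG"
    unfolding ideal_sq_def
  proof (rule ig_sub, rule subsetI)
    fix x assume "x \<in> {a * b |a b. a \<in> ideal_gen n G \<and> b \<in> ideal_gen n G}"
    then obtain a b where x: "x = a * b" "a \<in> ideal_gen n G" "b \<in> ideal_gen n G" by blast
    obtain H1 c1 where 1: "a = (\<Sum>g\<in>H1. c1 g * g)" "finite H1" "H1 \<subseteq> G" "\<forall>g\<in>H1. c1 g \<in> polyring n"
      using x(2) unfolding ideal_gen_def by blast
    obtain H2 c2 where 2: "b = (\<Sum>g\<in>H2. c2 g * g)" "finite H2" "H2 \<subseteq> G" "\<forall>g\<in>H2. c2 g \<in> polyring n"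
      using x(3) unfolding ideal_gen_def by blast
    have gb: "g * b \<in> ideal_gen n ?GG" if g: "g \<in> G" for g
    proof -
      have "g * b = (\<Sum>h\<in>H2. g * (c2 h * h))" unfolding 2(1) by (rule sum_distrib_left)
      also have "\<dots> = (\<Sum>h\<in>H2. c2 h * (g * h))" by (rule sum.cong[OF refl]) (rule mult.left_commute)
      also have "\<dots> \<in> ideal_gen n ?GG"
      proof (rule ig_sum)
        fix h assume h: "h \<in> H2"
        have "g * h \<in> ?GG" using g h 2(3) by blast
        moreover have "c2 h \<in> polyring n" using 2(4) h by blast
        ultimately show "c2 h * (g * h) \<in> ideal_gen n ?GG"
          by (intro ig_mult ig_gen)
      qed
      finally show ?thesis .
    qed
    have "x = (\<Sum>g\<in>H1. c1 g * g * b)" unfolding x(1) 1(1) by (rule sum_distrib_right)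
    also have "\<dots> = (\<Sum>g\<in>H1. c1 g * (g * b))" by (rule sum.cong[OF refl]) (rule mult.assoc)
    also have "\<dots> \<in> ideal_gen n ?GG"
    proof (rule ig_sum)
      fix g assume g: "g \<in> H1"
      have "c1 g \<in> polyring n" "g \<in> G" using 1(3,4) g by blast+
      then show "c1 g * (g * b) \<in> ideal_gen n ?GG"
        by (intro ig_mult gb)
    qed
    finally show "x \<in> ideal_gen n ?GG" .
  qed
qed

definition Vq :: "nat \<Rightarrow> nat set" where
  "Vq q = {p. p < q * q \<and> p div q \<le> p mod q}"

definition Dq :: "nat \<Rightarrow> nat set set" where
  "Dq q = {F. F \<subseteq> Vq q \<and> card {p\<in>F. p div q = p mod q} \<le> 1}"

lemma ple_mix:
  assumes "ple (x + x) b" "ple (y + y) (b :: nat \<Rightarrow>\<^sub>0 nat)"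
  shows "ple (x + y) b"
  unfolding ple_def
proof
  fix k
  have "Poly_Mapping.lookup (x + x) k \<le> Poly_Mapping.lookup b k" "Poly_Mapping.lookup (y + y) k \<le> Poly_Mapping.lookup b k"
    using assms unfolding ple_def by blast+
  then show "Poly_Mapping.lookup (x + y) k \<le> Poly_Mapping.lookup b k"
    unfolding lookup_add by linarith
qed

lemma Vq_fin: "finite (Vq q)"
  unfolding Vq_def by (rule finite_subset[of _ "{..<q*q}"]) auto

lemma pair_in_Vq:
  assumes "a \<le> c" "c < q"
  shows "a * q + c \<in> Vq q" "(a * q + c) div q = a" "(a * q + c) mod q = c"
proof -
  show d: "(a * q + c) div q = a" and m: "(a * q + c) mod q = c" using assms by simp_all
  have "a * q + c < a * q + q" using assms by simp
  also have "\<dots> = Suc a * q" by simp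
  also have "\<dots> \<le> q * q" using assms by (intro mult_right_mono) auto
  finally show "a * q + c \<in> Vq q" using d m assms by (simp add: Vq_def)
qed

lemma diag_eq:
  assumes "p \<in> Vq q" "p div q = p mod q"
  shows "p = (p div q) * q + p div q"
  using assms by (metis div_mult_mod_eq)

lemma cx_inst:
  assumes q: "0 < q" and mk: "\<And>i. i < q \<Longrightarrow> Poly_Mapping.keys (m i) \<subseteq> {..<n}"
  shows "cx (Vq q) (Dq q) (\<lambda>p. m (p div q) + m (p mod q)) n"
proof
  define E where "E p = m (p div q) + m (p mod q)" for p
  show "finite (Vq q)" by (rule Vq_fin)
  show "F \<subseteq> Vq q" if "F \<in> Dq q" for F using that by (simp add: Dq_def)
  show "G \<in> Dq q" if "F \<in> Dq q" "G \<subseteq> F" for F G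
  proof -
    have F: "F \<subseteq> Vq q" "card {p\<in>F. p div q = p mod q} \<le> 1" using that by (auto simp: Dq_def)
    have "finite F" using F(1) Vq_fin finite_subset by blast
    then have "card {p\<in>G. p div q = p mod q} \<le> card {p\<in>F. p div q = p mod q}"
      using that(2) by (intro card_mono) auto
    then show ?thesis using F that(2) by (auto simp: Dq_def)
  qed
  show "{} \<in> Dq q" by (simp add: Dq_def)
  show "Poly_Mapping.keys (m (v div q) + m (v mod q)) \<subseteq> {..<n}" if "v \<in> Vq q" for v
  proof -
    have "v div q < q" "v mod q < q" using that q by (auto simp: Vq_def less_mult_imp_div_less)
    then show ?thesis using mk keys_add_nat by blast
  qed
  show "\<exists>v\<in>Vq q. \<forall>F\<in>Dq q. ple (lab (\<lambda>p. m (p div q) + m (p mod q)) F) b \<longrightarrow>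
          insert v F \<in> Dq q \<and> ple (lab (\<lambda>p. m (p div q) + m (p mod q)) (insert v F)) b"
    if F0: "F0 \<in> Dq q" "F0 \<noteq> {}" "ple (lab (\<lambda>p. m (p div q) + m (p mod q)) F0) b" for b F0
  proof -
    have E_eq: "(\<lambda>p. m (p div q) + m (p mod q)) = E" by (simp add: E_def fun_eq_iff)
    note F03 = F0(3)[unfolded E_eq]
    have finD: "finite F" if "F \<in> Dq q" for F using that Vq_fin finite_subset by (auto simp: Dq_def)
    have ple_mem: "ple (E p) b" if "F \<in> Dq q" "ple (lab E F) b" "p \<in> F" for F p
      using that ple_lab_iff[OF finD[OF that(1)]] by blast
    define Db where "Db = {p \<in> Vq q. p div q = p mod q \<and> ple (E p) b}"
    have lab_ins: "ple (lab E (insert v F)) b" if "F \<in> Dq q" "ple (lab E F) b" "ple (E v) b" for F v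
      using that lab_insert_ple[OF finD[OF that(1)]] by blast
    have off_ok: "insert v F \<in> Dq q" if "F \<in> Dq q" "v \<in> Vq q" "v div q \<noteq> v mod q" for F v
    proof -
      have "{p\<in>insert v F. p div q = p mod q} = {p\<in>F. p div q = p mod q}" using that(3) by auto
      then show ?thesis using that by (auto simp: Dq_def)
    qed
    consider (two) p1 p2 where "p1 \<in> Db" "p2 \<in> Db" "p1 \<noteq> p2"
      | (one) p0 where "p0 \<in> Db" "\<forall>p\<in>Db. p = p0"
      | (none) "Db = {}"
    proof -
      assume c2: "\<And>p1 p2. p1 \<in> Db \<Longrightarrow> p2 \<in> Db \<Longrightarrow> p1 \<noteq> p2 \<Longrightarrow> thesis"
        and c1: "\<And>p0. p0 \<in> Db \<Longrightarrow> \<forall>p\<in>Db. p = p0 \<Longrightarrow> thesis"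
        and c0: "Db = {} \<Longrightarrow> thesis"
      show thesis
      proof (cases "Db = {}")
        case True then show thesis by (rule c0)
      next
        case False
        then obtain p0 where p0: "p0 \<in> Db" by blast
        show thesis
        proof (cases "\<forall>p\<in>Db. p = p0")
          case True then show thesis by (rule c1[OF p0])
        next
          case False
          then obtain p where "p \<in> Db" "p \<noteq> p0" by blast
          then show thesis by (rule c2[OF _ p0])
        qed
      qed
    qed
    then show ?thesis
    proof cases
      case two
      define i where "i = p1 div q"
      define j where "j = p2 div q"
      have d1: "p1 \<in> Vq q" "p1 mod q = i" "ple (m i + m i) b"
        using two(1) by (auto simp: Db_def i_def E_def)
      have d2: "p2 \<in> Vq q" "p2 mod q = j" "ple (m j + m j) b"
        using two(2) by (auto simp: Db_def j_def E_def)
      have "i \<noteq> j"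
      proof
        assume "i = j"
        then have "p1 = p2" using d1(2) d2(2) i_def j_def by (metis div_mult_mod_eq)
        then show False using two(3) by simp
      qed
      have iq: "i < q" "j < q" using d1 d2 q by (auto simp: Vq_def i_def j_def less_mult_imp_div_less)
      define a where "a = min i j"
      define c where "c = max i j"
      have ac: "a \<le> c" "c < q" "a \<noteq> c" using iq \<open>i \<noteq> j\<close> by (auto simp: a_def c_def)
      define v where "v = a * q + c"
      have v: "v \<in> Vq q" "v div q = a" "v mod q = c" using pair_in_Vq[OF ac(1,2)] by (simp_all add: v_def)
      have Ev: "ple (E v) b"
      proof -
        have "ple (m i + m j) b" by (rule ple_mix[OF d1(3) d2(3)])
        moreover have "m a + m c = m i + m j" by (auto simp: a_def c_def min_def max_def add.commute)
        ultimately show ?thesis using v by (simp add: E_def)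
      qed
      show ?thesis unfolding E_eq
      proof (intro bexI[OF _ v(1)] ballI impI conjI)
        fix F assume F: "F \<in> Dq q" "ple (lab E F) b"
        show "insert v F \<in> Dq q" by (rule off_ok[OF F(1) v(1)]) (use v ac in simp)
        show "ple (lab E (insert v F)) b" by (rule lab_ins[OF F Ev])
      qed
    next
      case one
      have p0: "p0 \<in> Vq q" "p0 div q = p0 mod q" "ple (E p0) b" using one(1) by (auto simp: Db_def)
      show ?thesis unfolding E_eq
      proof (intro bexI[OF _ p0(1)] ballI impI conjI)
        fix F assume F: "F \<in> Dq q" "ple (lab E F) b"
        have "{p\<in>insert p0 F. p div q = p mod q} \<subseteq> {p0}"
        proof
          fix p assume p: "p \<in> {p\<in>insert p0 F. p div q = p mod q}"
          show "p \<in> {p0}"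
          proof (cases "p = p0")
            case False
            then have "p \<in> F" "p div q = p mod q" using p by auto
            moreover have "p \<in> Vq q" using F(1) \<open>p \<in> F\<close> by (auto simp: Dq_def)
            moreover have "ple (E p) b" using ple_mem[OF F \<open>p \<in> F\<close>] .
            ultimately have "p \<in> Db" by (simp add: Db_def)
            then show ?thesis using one(2) by blast
          qed simp
        qed
        then have "card {p\<in>insert p0 F. p div q = p mod q} \<le> 1"
          using card_mono[of "{p0}"] by fastforce
        then show "insert p0 F \<in> Dq q" using F(1) p0(1) by (auto simp: Dq_def)
        show "ple (lab E (insert p0 F)) b" by (rule lab_ins[OF F p0(3)])
      qed
    next
      case none
      obtain p where p: "p \<in> F0" using F0(2) by blast
      have pV: "p \<in> Vq q" using F0(1) p by (auto simp: Dq_def)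
      have pE: "ple (E p) b" using ple_mem[OF F0(1) F03 p] .
      have pd: "p div q \<noteq> p mod q" using none pV pE by (auto simp: Db_def)
      show ?thesis unfolding E_eq
      proof (intro bexI[OF _ pV] ballI impI conjI)
        fix F assume F: "F \<in> Dq q" "ple (lab E F) b"
        show "insert p F \<in> Dq q" by (rule off_ok[OF F(1) pV pd])
        show "ple (lab E (insert p F)) b" by (rule lab_ins[OF F pE])
      qed
    qed
  qed
qed



lemma Dq_card:
  assumes q: "0 < q" and F: "F \<in> Dq q"
  shows "card F \<le> Suc (q choose 2)"
proof -
  have FV: "F \<subseteq> Vq q" and d: "card {p\<in>F. p div q = p mod q} \<le> 1" using F by (auto simp: Dq_def)
  have fin: "finite F" using FV Vq_fin finite_subset by blast
  have "F = {p\<in>F. p div q = p mod q} \<union> {p\<in>F. p div q \<noteq> p mod q}" by auto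
  then have "card F \<le> card {p\<in>F. p div q = p mod q} + card {p\<in>F. p div q \<noteq> p mod q}"
    by (metis card_Un_le)
  moreover have "card {p\<in>F. p div q \<noteq> p mod q} \<le> card {p::nat. p < q * q \<and> p div q < p mod q}"
  proof (rule card_mono)
    show "finite {p::nat. p < q * q \<and> p div q < p mod q}" by simp
    show "{p\<in>F. p div q \<noteq> p mod q} \<subseteq> {p. p < q * q \<and> p div q < p mod q}"
      using FV by (auto simp: Vq_def)
  qed
  ultimately show ?thesis using d card_off[OF q] by simp
qed

lemma Mq2_dim: "1 \<le> q \<Longrightarrow> sc_dim (Mq2 q) = int (q choose 2)"
proof -
  assume q: "1 \<le> q"
  define Off where "Off = {(a, b). 1 \<le> a \<and> a < b \<and> b \<le> (q::nat)}"
  have Off: "Off = (\<lambda>(i, j). (i + 1, j + 1)) ` {(i, j). i < j \<and> j < q}"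
  proof (rule set_eqI, rule iffI)
    fix x assume "x \<in> Off"
    then obtain a b where ab: "x = (a, b)" "1 \<le> a" "a < b" "b \<le> q" by (auto simp: Off_def)
    show "x \<in> (\<lambda>(i, j). (i + 1, j + 1)) ` {(i, j). i < j \<and> j < q}"
    proof (rule image_eqI[where x="(a - 1, b - 1)"])
      show "x = (\<lambda>(i, j). (i + 1, j + 1)) (a - 1, b - 1)" using ab by simp
      show "(a - 1, b - 1) \<in> {(i, j). i < j \<and> j < q}" using ab by auto
    qed
  next
    fix x assume "x \<in> (\<lambda>(i, j). (i + 1, j + 1)) ` {(i, j). i < j \<and> j < q}"
    then show "x \<in> Off" by (auto simp: Off_def)
  qed
  have inj: "inj_on (\<lambda>(i::nat, j::nat). (i + 1, j + 1)) {(i, j). i < j \<and> j < q}"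
    by (auto simp: inj_on_def)
  have cOff: "card Off = q choose 2" unfolding Off using card_image[OF inj] card_pairs[of q] by simp
  have finOff: "finite Off" unfolding Off by (rule finite_imageI) (rule finite_subset[of _ "{..<q} \<times> {..<q}"], auto)
  have feq: "Mq2_facet q i = insert (i, i) Off" for i by (auto simp: Mq2_facet_def Off_def)
  have cf: "card (Mq2_facet q i) = Suc (q choose 2)" for i
  proof -
    have "Mq2_facet q i = insert (i, i) Off" by (rule feq)
    moreover have "(i, i) \<notin> Off" by (simp add: Off_def)
    ultimately show ?thesis using finOff cOff by simp
  qed
  have finf: "finite (Mq2_facet q i)" for i using finOff by (simp add: feq)
  have le: "card F \<le> Suc (q choose 2)" if FM: "F \<in> Mq2 q" for F
  proof -
    obtain i where "F \<subseteq> Mq2_facet q i" using FM unfolding Mq2_def by blast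
    then show ?thesis using card_mono[OF finf] cf by metis
  qed
  have mem: "Mq2_facet q 1 \<in> Mq2 q" using q by (auto simp: Mq2_def)
  have "Max (card ` Mq2 q) = Suc (q choose 2)"
  proof (rule Max_eqI)
    show "finite (card ` Mq2 q)"
      by (rule finite_subset[of _ "{..Suc (q choose 2)}"]) (use le in auto)
    show "y \<le> Suc (q choose 2)" if "y \<in> card ` Mq2 q" for y using that le by blast
    show "Suc (q choose 2) \<in> card ` Mq2 q" using mem cf by (metis imageI)
  qed
  then show ?thesis by (simp add: sc_dim_def)
qed

theorem corollary3p8:
  fixes n q :: nat and I G :: "'a::field mpoly set"
  assumes "1 \<le> q"
    and "finite G" and "card G = q" and "G \<subseteq> monomials n"
    and "I = ideal_gen n G"
    and "\<forall>G'. G' \<subset> G \<longrightarrow> ideal_gen n G' \<noteq> I"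
  shows "int (pd n (ideal_sq n I)) \<le> sc_dim (Mq2 q) \<and> sc_dim (Mq2 q) = int (q choose 2)"
proof -
  have q0: "0 < q" using assms(1) by simp
  obtain g where g: "bij_betw g {0..<q} G"
    using ex_bij_betw_nat_finite[OF assms(2)] assms(3) by blast
  have gG: "g i \<in> G" if "i < q" for i using g that by (auto simp: bij_betw_def)
  define m where "m i = (SOME mm. g i = Poly_Mapping.single mm 1 \<and> Poly_Mapping.keys mm \<subseteq> {..<n})" for i
  have m: "g i = Poly_Mapping.single (m i) 1 \<and> Poly_Mapping.keys (m i) \<subseteq> {..<n}" if "i < q" for i
  proof -
    have "g i \<in> monomials n" using gG[OF that] assms(4) by blast
    then have "\<exists>mm. g i = Poly_Mapping.single mm 1 \<and> Poly_Mapping.keys mm \<subseteq> {..<n}"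
      by (auto simp: monomials_def)
    then show ?thesis unfolding m_def by (rule someI_ex)
  qed
  define E where "E p = m (p div q) + m (p mod q)" for p
  have Ef: "(\<lambda>p. m (p div q) + m (p mod q)) = E" by (simp add: E_def fun_eq_iff)
  interpret C: cx "Vq q" "Dq q" E n
    unfolding Ef[symmetric] by (rule cx_inst[OF q0]) (use m in blast)
  have res: "free_resolution n (ideal_gen n ((\<lambda>u. Poly_Mapping.single (E u) (1::'a)) ` {u \<in> Vq q. {u} \<in> Dq q})) (q choose 2) C.rr C.AA (C.eps :: nat \<Rightarrow> 'a mpoly)"
    by (rule C.cx_res) (use Dq_card[OF q0] in blast)
  have U: "{u \<in> Vq q. {u} \<in> Dq q} = Vq q"
  proof -
    have "{u} \<in> Dq q" if "u \<in> Vq q" for u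
    proof -
      have "card {p\<in>{u}. p div q = p mod q} \<le> card {u}" by (rule card_mono) auto
      then show ?thesis using that by (simp add: Dq_def)
    qed
    then show ?thesis by blast
  qed
  have img: "(\<lambda>u. Poly_Mapping.single (E u) (1::'a)) ` Vq q = {a * b | a b. a \<in> G \<and> b \<in> G}"
  proof (rule set_eqI, rule iffI)
    fix x assume "x \<in> (\<lambda>u. Poly_Mapping.single (E u) (1::'a)) ` Vq q"
    then obtain p where p: "p \<in> Vq q" "x = Poly_Mapping.single (E p) 1" by blast
    have lt: "p div q < q" "p mod q < q" using p(1) q0 by (auto simp: Vq_def less_mult_imp_div_less)
    have "x = g (p div q) * g (p mod q)" using p(2) m[OF lt(1)] m[OF lt(2)] by (simp add: E_def mult_single)
    then show "x \<in> {a * b | a b. a \<in> G \<and> b \<in> G}" using gG lt by blast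
  next
    fix x assume "x \<in> {a * b | a b. a \<in> G \<and> b \<in> G}"
    then obtain a b where ab: "x = a * b" "a \<in> G" "b \<in> G" by blast
    obtain i where i: "i < q" "a = g i" using ab(2) g by (auto simp: bij_betw_def)
    obtain j where j: "j < q" "b = g j" using ab(3) g by (auto simp: bij_betw_def)
    define s where "s = min i j"
    define t where "t = max i j"
    have st: "s \<le> t" "t < q" using i j by (auto simp: s_def t_def)
    have "x = g s * g t" using ab(1) i j by (auto simp: s_def t_def min_def max_def mult.commute)
    also have "\<dots> = Poly_Mapping.single (E (s * q + t)) 1"
      using m[of s] m[of t] st pair_in_Vq[OF st] by (simp add: E_def mult_single)
    finally show "x \<in> (\<lambda>u. Poly_Mapping.single (E u) (1::'a)) ` Vq q"
      using pair_in_Vq(1)[OF st] by blast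
  qed
  have J: "ideal_gen n ((\<lambda>u. Poly_Mapping.single (E u) (1::'a)) ` {u \<in> Vq q. {u} \<in> Dq q}) = ideal_sq n I"
  proof -
    have "G \<subseteq> polyring n"
    proof
      fix x assume "x \<in> G"
      then obtain mm where mm: "x = Poly_Mapping.single mm 1" "Poly_Mapping.keys mm \<subseteq> {..<n}"
        using assms(4) by (auto simp: monomials_def)
      then show "x \<in> polyring n" by (simp add: polyring_def)
    qed
    then show ?thesis unfolding U img assms(5) by (rule ideal_sq_gen[symmetric])
  qed
  have "pd n (ideal_sq n I) \<le> q choose 2"
    unfolding pd_def
  proof (rule Least_le)
    show "\<exists>r A eps. free_resolution n (ideal_sq n I) (q choose 2) r A eps"
      using res J by metis
  qed
  then show ?thesis using Mq2_dim[OF assms(1)] by simp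
qed

end
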